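(* Let $k$ be a commutative ring and $A$ a commutative $k$-algebra with $\mathbb Q\subset A$ such that $\operatorname{Der}_k(A)$ is a projective $A$-module of finite rank. Then the canonical homomorphism of graded $A$-algebras $\tau_{A/k}:\operatorname{Sym}\operatorname{Der}_k(A)\to\operatorname{gr}\operatorname{Diff}_{A/k}$ is an isomorphism.
   Context: $\operatorname{Diff}_{A/k}$ is the ring of $k$-linear differential operators of $A$ (order $0$ = multiplications by elements of $A$; $\varphi$ has order $\le i+1$ iff $\varphi\circ a-a\circ\varphi$ has order $\le i$ for all $a$), filtered by order; $\operatorname{gr}\operatorname{Diff}_{A/k}$ is the associated graded ring, which is commutative. $\tau_{A/k}$ is the graded $A$-algebra homomorphism induced by the $A$-linear isomorphism $\operatorname{Der}_k(A)\to\operatorname{gr}^1\operatorname{Diff}_{A/k}$, $\delta\mapsto\sigma_1(\delta)$ (class of $\delta$ modulo order $0$ operators). *)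

theory Defs
  imports Main "HOL-Library.Multiset"
begin

text \<open>A commutative k-algebra A: types 'k and 'a (commutative rings) together with a
 ring homomorphism iota : k -> A (the structure map).  Everything below is relative to iota.\<close>

definition ring_hom_map :: "('k::comm_ring_1 \<Rightarrow> 'a::comm_ring_1) \<Rightarrow> bool" where
  "ring_hom_map \<iota> \<longleftrightarrow> \<iota> 1 = 1 \<and> (\<forall>x y. \<iota> (x + y) = \<iota> x + \<iota> y) \<and> (\<forall>x y. \<iota> (x * y) = \<iota> x * \<iota> y)"

text \<open>Q is contained in A: every positive integer is invertible in A.\<close>
definition contains_rationals :: "'a::comm_ring_1 itself \<Rightarrow> bool" where
  "contains_rationals _ \<longleftrightarrow> (\<forall>n::nat. n > 0 \<longrightarrow> (\<exists>b::'a. of_nat n * b = 1))"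

definition klinear :: "('k::comm_ring_1 \<Rightarrow> 'a::comm_ring_1) \<Rightarrow> ('a \<Rightarrow> 'a) \<Rightarrow> bool" where
  "klinear \<iota> \<phi> \<longleftrightarrow> (\<forall>x y. \<phi> (x + y) = \<phi> x + \<phi> y) \<and> (\<forall>c x. \<phi> (\<iota> c * x) = \<iota> c * \<phi> x)"

definition Der :: "('k::comm_ring_1 \<Rightarrow> 'a::comm_ring_1) \<Rightarrow> ('a \<Rightarrow> 'a) set" where
  "Der \<iota> = {\<delta>. klinear \<iota> \<delta> \<and> (\<forall>x y. \<delta> (x * y) = x * \<delta> y + y * \<delta> x)}"

text \<open>Differential operators of order <= n (Grothendieck's inductive definition).\<close>
fun diff_le :: "('k::comm_ring_1 \<Rightarrow> 'a::comm_ring_1) \<Rightarrow> nat \<Rightarrow> ('a \<Rightarrow> 'a) \<Rightarrow> bool" where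
  "diff_le \<iota> 0 \<phi> = (\<exists>a. \<phi> = (\<lambda>x. a * x))"
| "diff_le \<iota> (Suc i) \<phi> = (klinear \<iota> \<phi> \<and> (\<forall>a. diff_le \<iota> i (\<lambda>x. \<phi> (a * x) - a * \<phi> x)))"

text \<open>Membership in the filtration step below degree n (order <= n-1; the zero operator for n = 0).\<close>
definition diff_lower :: "('k::comm_ring_1 \<Rightarrow> 'a::comm_ring_1) \<Rightarrow> nat \<Rightarrow> ('a \<Rightarrow> 'a) \<Rightarrow> bool" where
  "diff_lower \<iota> n \<phi> = (case n of 0 \<Rightarrow> \<phi> = (\<lambda>x. 0) | Suc m \<Rightarrow> diff_le \<iota> m \<phi>)"

text \<open>Der_k(A) is a finitely generated projective A-module: an A-linear retract of a finite free
  module A^m (vectors nat => 'a vanishing from m on).\<close>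
definition free_fin :: "nat \<Rightarrow> (nat \<Rightarrow> 'a::comm_ring_1) set" where
  "free_fin m = {v. \<forall>i\<ge>m. v i = 0}"

definition Der_fg_projective :: "('k::comm_ring_1 \<Rightarrow> 'a::comm_ring_1) \<Rightarrow> bool" where
  "Der_fg_projective \<iota> \<longleftrightarrow> (\<exists>m (s :: ('a \<Rightarrow> 'a) \<Rightarrow> nat \<Rightarrow> 'a) (p :: (nat \<Rightarrow> 'a) \<Rightarrow> 'a \<Rightarrow> 'a).
      (\<forall>\<delta>\<in>Der \<iota>. s \<delta> \<in> free_fin m)
    \<and> (\<forall>v\<in>free_fin m. p v \<in> Der \<iota>)
    \<and> (\<forall>\<delta>\<in>Der \<iota>. \<forall>\<delta>'\<in>Der \<iota>. s (\<lambda>x. \<delta> x + \<delta>' x) = (\<lambda>i. s \<delta> i + s \<delta>' i))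
    \<and> (\<forall>\<delta>\<in>Der \<iota>. \<forall>a. s (\<lambda>x. a * \<delta> x) = (\<lambda>i. a * s \<delta> i))
    \<and> (\<forall>v\<in>free_fin m. \<forall>w\<in>free_fin m. p (\<lambda>i. v i + w i) = (\<lambda>x. p v x + p w x))
    \<and> (\<forall>v\<in>free_fin m. \<forall>a. p (\<lambda>i. a * v i) = (\<lambda>x. a * p v x))
    \<and> (\<forall>\<delta>\<in>Der \<iota>. p (s \<delta>) = \<delta>))"

text \<open>Degree-n part of the symmetric algebra: the free A-module on n-tuples of derivations
  (finitely supported coefficient functions) modulo the submodule sym_rel generated by
  multilinearity and symmetry relations.\<close>
definition sym_free :: "('k::comm_ring_1 \<Rightarrow> 'a::comm_ring_1) \<Rightarrow> nat \<Rightarrow> (('a \<Rightarrow> 'a) list \<Rightarrow> 'a) set" where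
  "sym_free \<iota> n = {c. finite {xs. c xs \<noteq> 0} \<and> (\<forall>xs. c xs \<noteq> 0 \<longrightarrow> length xs = n \<and> set xs \<subseteq> Der \<iota>)}"

definition single :: "('a \<Rightarrow> 'a) list \<Rightarrow> ('a \<Rightarrow> 'a) list \<Rightarrow> 'a::comm_ring_1" where
  "single xs = (\<lambda>zs. if zs = xs then 1 else 0)"

inductive sym_rel_p :: "('k::comm_ring_1 \<Rightarrow> 'a::comm_ring_1) \<Rightarrow> nat \<Rightarrow> (('a \<Rightarrow> 'a) list \<Rightarrow> 'a) \<Rightarrow> bool"
  for \<iota> :: "'k::comm_ring_1 \<Rightarrow> 'a::comm_ring_1" and n :: nat where
  zero: "sym_rel_p \<iota> n (\<lambda>zs. 0)"
| add: "sym_rel_p \<iota> n c \<Longrightarrow> sym_rel_p \<iota> n d \<Longrightarrow> sym_rel_p \<iota> n (\<lambda>zs. c zs + d zs)"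
| smult: "sym_rel_p \<iota> n c \<Longrightarrow> sym_rel_p \<iota> n (\<lambda>zs. a * c zs)"
| additive: "set xs \<subseteq> Der \<iota> \<Longrightarrow> set ys \<subseteq> Der \<iota> \<Longrightarrow> \<delta> \<in> Der \<iota> \<Longrightarrow> \<delta>' \<in> Der \<iota> \<Longrightarrow>
    length xs + length ys + 1 = n \<Longrightarrow>
    sym_rel_p \<iota> n (\<lambda>zs. single (xs @ [(\<lambda>x. \<delta> x + \<delta>' x)] @ ys) zs - single (xs @ [\<delta>] @ ys) zs
           - single (xs @ [\<delta>'] @ ys) zs)"
| homogeneous: "set xs \<subseteq> Der \<iota> \<Longrightarrow> set ys \<subseteq> Der \<iota> \<Longrightarrow> \<delta> \<in> Der \<iota> \<Longrightarrow>
    length xs + length ys + 1 = n \<Longrightarrow>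
    sym_rel_p \<iota> n (\<lambda>zs. single (xs @ [(\<lambda>x. a * \<delta> x)] @ ys) zs - a * single (xs @ [\<delta>] @ ys) zs)"
| symmetric: "set xs \<subseteq> Der \<iota> \<Longrightarrow> length xs = n \<Longrightarrow> mset ys = mset xs \<Longrightarrow>
    sym_rel_p \<iota> n (\<lambda>zs. single xs zs - single ys zs)"

definition sym_rel :: "('k::comm_ring_1 \<Rightarrow> 'a::comm_ring_1) \<Rightarrow> nat \<Rightarrow> (('a \<Rightarrow> 'a) list \<Rightarrow> 'a) set" where
  "sym_rel \<iota> n = {c. sym_rel_p \<iota> n c}"

definition comp_list :: "('a \<Rightarrow> 'a) list \<Rightarrow> 'a \<Rightarrow> 'a" where
  "comp_list xs = foldr (\<circ>) xs id"

text \<open>tau on representatives: delta_1 ... delta_n |-> delta_1 o ... o delta_n (class mod lower order).\<close>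
definition tau :: "(('a \<Rightarrow> 'a) list \<Rightarrow> 'a::comm_ring_1) \<Rightarrow> 'a \<Rightarrow> 'a" where
  "tau c = (\<lambda>x. \<Sum>xs\<in>{xs. c xs \<noteq> 0}. c xs * comp_list xs x)"

end

theory Submission
  imports Defs
begin

section \<open>Derivations\<close>

lemma Der_iff: "\<delta> \<in> Der \<iota> \<longleftrightarrow> (\<forall>x y. \<delta> (x + y) = \<delta> x + \<delta> y) \<and> (\<forall>c x. \<delta> (\<iota> c * x) = \<iota> c * \<delta> x)
   \<and> (\<forall>x y. \<delta> (x * y) = x * \<delta> y + y * \<delta> x)"
  by (simp add: Der_def klinear_def)

lemma Der_add: "\<delta> \<in> Der \<iota> \<Longrightarrow> \<delta> (x + y) = \<delta> x + \<delta> y"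
  unfolding Der_iff by blast
lemma Der_mult: "\<delta> \<in> Der \<iota> \<Longrightarrow> \<delta> (x * y) = x * \<delta> y + y * \<delta> x"
  unfolding Der_iff by blast
lemma Der_hom: "\<delta> \<in> Der \<iota> \<Longrightarrow> \<delta> (\<iota> c * x) = \<iota> c * \<delta> x"
  unfolding Der_iff by blast
lemma Der_zero: "\<delta> \<in> Der \<iota> \<Longrightarrow> \<delta> 0 = 0"
  using Der_add[of \<delta> \<iota> 0 0] by simp
lemma Der_diff: "\<delta> \<in> Der \<iota> \<Longrightarrow> \<delta> (x - y) = \<delta> x - \<delta> y"
  using Der_add[of \<delta> \<iota> "x - y" y] by simp
lemma Der_one: "\<delta> \<in> Der \<iota> \<Longrightarrow> \<delta> 1 = 0"
  using Der_mult[of \<delta> \<iota> 1 1] by simp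

lemma Der_0: "(\<lambda>x. 0) \<in> Der \<iota>"
  by (simp add: Der_iff)
lemma Der_plus: "\<delta> \<in> Der \<iota> \<Longrightarrow> \<delta>' \<in> Der \<iota> \<Longrightarrow> (\<lambda>x. \<delta> x + \<delta>' x) \<in> Der \<iota>"
proof -
  assume a: "\<delta> \<in> Der \<iota>" "\<delta>' \<in> Der \<iota>"
  show ?thesis unfolding Der_iff
    using Der_add[OF a(1)] Der_add[OF a(2)] Der_hom[OF a(1)] Der_hom[OF a(2)] Der_mult[OF a(1)] Der_mult[OF a(2)]
    by (simp add: algebra_simps)
qed
lemma Der_smult: "\<delta> \<in> Der \<iota> \<Longrightarrow> (\<lambda>x. a * \<delta> x) \<in> Der \<iota>"
proof -
  assume a: "\<delta> \<in> Der \<iota>"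
  show ?thesis unfolding Der_iff
    using Der_add[OF a(1)] Der_hom[OF a(1)] Der_mult[OF a(1)]
    by (simp add: algebra_simps)
qed
lemma Der_sum: "finite S \<Longrightarrow> (\<And>i. i \<in> S \<Longrightarrow> d i \<in> Der \<iota>) \<Longrightarrow> (\<lambda>x. \<Sum>i\<in>S. g i * d i x) \<in> Der \<iota>"
proof (induction S rule: finite_induct)
  case empty then show ?case by (simp add: Der_0)
next
  case (insert i S)
  then show ?case using Der_plus[OF Der_smult[of "d i" \<iota> "g i"], of "\<lambda>x. \<Sum>i\<in>S. g i * d i x"]
    by simp
qed

section \<open>Brackets\<close>

definition brk :: "('a \<Rightarrow> 'a) \<Rightarrow> 'a \<Rightarrow> 'a \<Rightarrow> 'a::comm_ring_1" where
  "brk \<phi> a = (\<lambda>x. \<phi> (a * x) - a * \<phi> x)"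

fun brs :: "('a \<Rightarrow> 'a) \<Rightarrow> 'a list \<Rightarrow> 'a \<Rightarrow> 'a::comm_ring_1" where
  "brs \<phi> [] = \<phi>"
| "brs \<phi> (a # as) = brs (brk \<phi> a) as"

lemma diff_le_Suc': "diff_le \<iota> (Suc i) \<phi> = (klinear \<iota> \<phi> \<and> (\<forall>a. diff_le \<iota> i (brk \<phi> a)))"
  by (simp add: brk_def)

declare diff_le.simps(2)[simp del]

lemma klinear_mult: "klinear \<iota> (\<lambda>x. a * x)"
  by (simp add: klinear_def algebra_simps)

lemma klinear_plus: "klinear \<iota> \<phi> \<Longrightarrow> klinear \<iota> \<psi> \<Longrightarrow> klinear \<iota> (\<lambda>x. \<phi> x + \<psi> x)"
  unfolding klinear_def by (simp add: distrib_left)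
lemma klinear_smult: "klinear \<iota> \<phi> \<Longrightarrow> klinear \<iota> (\<lambda>x. c * \<phi> x)"
  unfolding klinear_def by (simp add: distrib_left mult.left_commute)
lemma klinear_comp: "klinear \<iota> \<phi> \<Longrightarrow> klinear \<iota> \<psi> \<Longrightarrow> klinear \<iota> (\<phi> \<circ> \<psi>)"
  unfolding klinear_def by simp

lemma diff_le_additive: "diff_le \<iota> n \<phi> \<Longrightarrow> \<phi> (x + y) = \<phi> x + \<phi> y"
  by (cases n) (auto simp: diff_le_Suc' klinear_def distrib_left)

lemma diff_le_diff_app: "diff_le \<iota> n \<phi> \<Longrightarrow> \<phi> (x - y) = \<phi> x - \<phi> y"
  using diff_le_additive[of \<iota> n \<phi> "x - y" y] by simp

lemma brk_zero[simp]: "brk (\<lambda>x. 0) a = (\<lambda>x. 0)"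
  by (simp add: brk_def)
lemma brk_mult[simp]: "brk (\<lambda>x. c * x) a = (\<lambda>x. 0)"
  by (simp add: brk_def algebra_simps)
lemma brs_zero[simp]: "brs (\<lambda>x. 0) as = (\<lambda>x. 0)"
  by (induction as) auto

lemma diff_le_zero0: "diff_le \<iota> 0 (\<lambda>x. 0)"
  by (simp only: diff_le.simps) (intro exI[of _ 0], simp add: fun_eq_iff)

lemma diff_le_zero: "diff_le \<iota> n (\<lambda>x. 0)"
proof (induction n)
  case 0 show ?case by (rule diff_le_zero0)
next
  case (Suc n) then show ?case by (simp add: diff_le_Suc' klinear_def)
qed

lemma diff_le_mono: "diff_le \<iota> n \<phi> \<Longrightarrow> diff_le \<iota> (Suc n) \<phi>"
proof (induction n arbitrary: \<phi>)
  case 0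
  then obtain a where "\<phi> = (\<lambda>x. a * x)" by auto
  moreover have "diff_le \<iota> 0 (\<lambda>x. 0)" by (simp add: diff_le_zero)
  ultimately show ?case by (simp add: diff_le_Suc' klinear_mult)
next
  case (Suc n)
  then show ?case by (subst diff_le_Suc') (auto simp: diff_le_Suc'[of _ n])
qed

lemma diff_le_mono': "diff_le \<iota> n \<phi> \<Longrightarrow> n \<le> k \<Longrightarrow> diff_le \<iota> k \<phi>"
proof -
  assume a: "diff_le \<iota> n \<phi>" "n \<le> k"
  then obtain d where "k = n + d" using le_Suc_ex by blast
  moreover have "diff_le \<iota> (n + d) \<phi>" by (induction d) (auto intro: diff_le_mono a)
  ultimately show ?thesis by simp
qed

lemma brk_plus: "brk (\<lambda>x. \<phi> x + \<psi> x) a = (\<lambda>x. brk \<phi> a x + brk \<psi> a x)"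
  by (simp add: brk_def algebra_simps)
lemma brk_minus: "brk (\<lambda>x. \<phi> x - \<psi> x) a = (\<lambda>x. brk \<phi> a x - brk \<psi> a x)"
  by (simp add: brk_def algebra_simps)
lemma brk_smult: "brk (\<lambda>x. c * \<phi> x) a = (\<lambda>x. c * brk \<phi> a x)"
  by (simp add: brk_def algebra_simps)
lemma brk_sum: "brk (\<lambda>x. \<Sum>i\<in>S. g i * f i x) a = (\<lambda>x. \<Sum>i\<in>S. g i * brk (f i) a x)"
  by (simp add: brk_def algebra_simps sum_distrib_left sum_subtractf)

lemma brs_plus: "brs (\<lambda>x. \<phi> x + \<psi> x) as = (\<lambda>x. brs \<phi> as x + brs \<psi> as x)"
  by (induction as arbitrary: \<phi> \<psi>) (auto simp: brk_plus)
lemma brs_minus: "brs (\<lambda>x. \<phi> x - \<psi> x) as = (\<lambda>x. brs \<phi> as x - brs \<psi> as x)"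
  by (induction as arbitrary: \<phi> \<psi>) (auto simp: brk_minus)
lemma brs_smult: "brs (\<lambda>x. c * \<phi> x) as = (\<lambda>x. c * brs \<phi> as x)"
  by (induction as arbitrary: \<phi>) (auto simp: brk_smult)
lemma brs_sum: "brs (\<lambda>x. \<Sum>i\<in>S. g i * f i x) as = (\<lambda>x. \<Sum>i\<in>S. g i * brs (f i) as x)"
  by (induction as arbitrary: f) (auto simp: brk_sum)
lemma brs_append: "brs \<phi> (as @ bs) = brs (brs \<phi> as) bs"
  by (induction as arbitrary: \<phi>) auto

lemma diff_le_plus: "diff_le \<iota> n \<phi> \<Longrightarrow> diff_le \<iota> n \<psi> \<Longrightarrow> diff_le \<iota> n (\<lambda>x. \<phi> x + \<psi> x)"
proof (induction n arbitrary: \<phi> \<psi>)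
  case 0
  then obtain a b where "\<phi> = (\<lambda>x. a * x)" "\<psi> = (\<lambda>x. b * x)" by auto
  then have "(\<lambda>x. \<phi> x + \<psi> x) = (\<lambda>x. (a + b) * x)" by (simp add: distrib_right)
  then show ?case by (simp only: diff_le.simps) blast
next
  case (Suc n)
  then show ?case by (simp add: diff_le_Suc' brk_plus klinear_plus)
qed

lemma diff_le_smult: "diff_le \<iota> n \<phi> \<Longrightarrow> diff_le \<iota> n (\<lambda>x. c * \<phi> x)"
proof (induction n arbitrary: \<phi>)
  case 0
  then obtain a where "\<phi> = (\<lambda>x. a * x)" by auto
  then have "(\<lambda>x. c * \<phi> x) = (\<lambda>x. (c * a) * x)" by (simp add: mult.assoc)
  then show ?case by (simp only: diff_le.simps) blast
next
  case (Suc n)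
  then show ?case by (simp add: diff_le_Suc' brk_smult klinear_smult)
qed

lemma diff_le_minus: "diff_le \<iota> n \<phi> \<Longrightarrow> diff_le \<iota> n \<psi> \<Longrightarrow> diff_le \<iota> n (\<lambda>x. \<phi> x - \<psi> x)"
proof -
  assume a: "diff_le \<iota> n \<phi>" "diff_le \<iota> n \<psi>"
  have "diff_le \<iota> n (\<lambda>x. \<phi> x + (-1) * \<psi> x)"
    by (rule diff_le_plus[OF a(1) diff_le_smult[OF a(2)]])
  moreover have "(\<lambda>x. \<phi> x + (-1) * \<psi> x) = (\<lambda>x. \<phi> x - \<psi> x)" by simp
  ultimately show ?thesis by simp
qed

lemma diff_le_sum: "finite S \<Longrightarrow> (\<And>i. i \<in> S \<Longrightarrow> diff_le \<iota> n (f i)) \<Longrightarrow>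
  diff_le \<iota> n (\<lambda>x. \<Sum>i\<in>S. g i * f i x)"
proof (induction S rule: finite_induct)
  case empty then show ?case by (simp add: diff_le_zero)
next
  case (insert i S)
  then show ?case using diff_le_plus[OF diff_le_smult[of \<iota> n "f i" "g i"]] by simp
qed

lemma diff_le_brs: "diff_le \<iota> n \<phi> \<Longrightarrow> length as \<le> n \<Longrightarrow> diff_le \<iota> (n - length as) (brs \<phi> as)"
proof (induction as arbitrary: \<phi> n)
  case Nil then show ?case by simp
next
  case (Cons a as)
  then obtain n' where n: "n = Suc n'" by (cases n) auto
  with Cons show ?case by (auto simp: diff_le_Suc')
qed

lemma diff_le0_eq: "diff_le \<iota> 0 \<phi> \<Longrightarrow> \<phi> = (\<lambda>x. \<phi> 1 * x)"
  by auto

lemma brs_eq_len: "diff_le \<iota> n \<phi> \<Longrightarrow> length as = n \<Longrightarrow> brs \<phi> as = (\<lambda>x. brs \<phi> as 1 * x)"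
  using diff_le_brs[of \<iota> n \<phi> as] by (intro diff_le0_eq[of \<iota>]) auto

lemma brs_gt_len: "diff_le \<iota> n \<phi> \<Longrightarrow> length as > n \<Longrightarrow> brs \<phi> as = (\<lambda>x. 0)"
proof -
  assume a: "diff_le \<iota> n \<phi>" "length as > n"
  define bs where "bs = take n as"
  define c where "c = as ! n"
  define cs where "cs = drop (Suc n) as"
  have as: "as = bs @ c # cs" "length bs = n"
    using a(2) by (auto simp: bs_def c_def cs_def id_take_nth_drop)
  have h: "brs \<phi> bs = (\<lambda>x. brs \<phi> bs 1 * x)" using brs_eq_len[OF a(1) as(2)] .
  have "brs \<phi> as = brs (brk (brs \<phi> bs) c) cs" unfolding as(1) brs_append by simp
  also have "brk (brs \<phi> bs) c = (\<lambda>x. 0)" by (subst h) (rule brk_mult)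
  finally show ?thesis by simp
qed

lemma diff_le_klinear: "diff_le \<iota> n \<phi> \<Longrightarrow> klinear \<iota> \<phi>"
  by (cases n) (auto simp: diff_le_Suc' klinear_mult)

lemma klinear_minus: "klinear \<iota> \<phi> \<Longrightarrow> klinear \<iota> \<psi> \<Longrightarrow> klinear \<iota> (\<lambda>x. \<phi> x - \<psi> x)"
  unfolding klinear_def by (simp add: right_diff_distrib)

lemma diff_le_mult[simp]: "diff_le \<iota> 0 ((*) a)"
  by (simp only: diff_le.simps) (rule exI[of _ a], simp)

lemma diff_le_eq_mult: "\<phi> = (\<lambda>x. a * x) \<Longrightarrow> diff_le \<iota> 0 \<phi>"
proof -
  assume h: "\<phi> = (\<lambda>x. a * x)"
  show ?thesis unfolding h by (rule diff_le_mult)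
qed

lemma diff_le0E: "diff_le \<iota> 0 \<phi> \<Longrightarrow> (\<And>a. \<phi> = (\<lambda>x. a * x) \<Longrightarrow> P) \<Longrightarrow> P"
  by auto

declare diff_le.simps(1)[simp del]

lemma brk_comp: "diff_le \<iota> n \<phi> \<Longrightarrow>
  brk (\<phi> \<circ> \<psi>) a = (\<lambda>x. brk \<phi> a (\<psi> x) + \<phi> (brk \<psi> a x))"
  unfolding brk_def by (auto simp: diff_le_diff_app)

lemma diff_le_comp_aux: "n + m = k \<Longrightarrow> diff_le \<iota> n \<phi> \<Longrightarrow> diff_le \<iota> m \<psi> \<Longrightarrow> diff_le \<iota> k (\<phi> \<circ> \<psi>)"
proof (induction k arbitrary: n m \<phi> \<psi>)
  case 0
  then obtain a b where "\<phi> = (\<lambda>x. a * x)" "\<psi> = (\<lambda>x. b * x)" by (auto elim!: diff_le0E)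
  then have "\<phi> \<circ> \<psi> = (\<lambda>x. (a * b) * x)" by (auto simp: mult.assoc)
  then show ?case by (rule diff_le_eq_mult)
next
  case (Suc k)
  note IH = Suc.IH
  note pr = Suc.prems
  have kl: "klinear \<iota> (\<phi> \<circ> \<psi>)"
    using pr by (intro klinear_comp diff_le_klinear) auto
  have t1: "diff_le \<iota> k (\<lambda>x. brk \<phi> a (\<psi> x))" for a
  proof (cases "n = 0")
    case True
    then obtain c where "\<phi> = (\<lambda>x. c * x)" using pr by (auto elim!: diff_le0E)
    then show ?thesis by (simp add: diff_le_zero)
  next
    case False
    then obtain n' where n': "n = Suc n'" by (cases n) auto
    then have "diff_le \<iota> n' (brk \<phi> a)" using pr by (simp add: diff_le_Suc')
    moreover have "n' + m = k" using pr n' by simp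
    ultimately have "diff_le \<iota> k (brk \<phi> a \<circ> \<psi>)" using IH pr(3) by blast
    then show ?thesis by (simp add: comp_def)
  qed
  have t2: "diff_le \<iota> k (\<lambda>x. \<phi> (brk \<psi> a x))" for a
  proof (cases "m = 0")
    case True
    then obtain c where "\<psi> = (\<lambda>x. c * x)" using pr by (auto elim!: diff_le0E)
    then have "(\<lambda>x. \<phi> (brk \<psi> a x)) = (\<lambda>x. \<phi> 0)" by simp
    also have "\<phi> 0 = 0" using diff_le_additive[OF pr(2), of 0 0] by simp
    finally show ?thesis by (simp add: diff_le_zero)
  next
    case False
    then obtain m' where m': "m = Suc m'" by (cases m) auto
    then have "diff_le \<iota> m' (brk \<psi> a)" using pr by (simp add: diff_le_Suc')
    moreover have "n + m' = k" using pr m' by simp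
    ultimately have "diff_le \<iota> k (\<phi> \<circ> brk \<psi> a)" using IH pr(2) by blast
    then show ?thesis by (simp add: comp_def)
  qed
  show ?case unfolding diff_le_Suc'
  proof (intro conjI allI kl)
    fix a show "diff_le \<iota> k (brk (\<phi> \<circ> \<psi>) a)"
      unfolding brk_comp[OF pr(2)] by (rule diff_le_plus[OF t1 t2])
  qed
qed

lemma diff_le_comp: "diff_le \<iota> n \<phi> \<Longrightarrow> diff_le \<iota> m \<psi> \<Longrightarrow> diff_le \<iota> (n + m) (\<phi> \<circ> \<psi>)"
  using diff_le_comp_aux by blast

lemma Der_klinear: "\<delta> \<in> Der \<iota> \<Longrightarrow> klinear \<iota> \<delta>"
  by (simp add: Der_def)

lemma Der_diff_le1: "\<delta> \<in> Der \<iota> \<Longrightarrow> diff_le \<iota> 1 \<delta>"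
proof -
  assume d: "\<delta> \<in> Der \<iota>"
  have "brk \<delta> a = (\<lambda>x. \<delta> a * x)" for a
    by (auto simp: brk_def Der_mult[OF d] mult.commute)
  then show ?thesis by (simp add: diff_le_Suc' Der_klinear[OF d] diff_le_mult)
qed

lemma comp_list_Nil[simp]: "comp_list [] = id"
  by (simp add: comp_list_def)
lemma comp_list_Cons[simp]: "comp_list (d # xs) = d \<circ> comp_list xs"
  by (simp add: comp_list_def)
lemma comp_list_append: "comp_list (xs @ ys) = comp_list xs \<circ> comp_list ys"
  by (induction xs) auto

lemma diff_le_id: "diff_le \<iota> 0 (id :: 'a \<Rightarrow> 'a::comm_ring_1)"
proof -
  have "diff_le \<iota> 0 ((*) (1::'a))" by (rule diff_le_mult)
  moreover have "((*) (1::'a)) = id" by (simp add: fun_eq_iff)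
  ultimately show ?thesis by metis
qed

lemma diff_le_comp_list: "set xs \<subseteq> Der \<iota> \<Longrightarrow> diff_le \<iota> (length xs) (comp_list xs)"
proof (induction xs)
  case Nil then show ?case using diff_le_id[of \<iota>] by (simp add: id_def)
next
  case (Cons d xs)
  then show ?case using diff_le_comp[OF Der_diff_le1[of d \<iota>], of "length xs" "comp_list xs"] by (simp add: comp_def)
qed

lemma comp_list_additive: "set xs \<subseteq> Der \<iota> \<Longrightarrow> comp_list xs (x + y) = comp_list xs x + comp_list xs y"
  using diff_le_additive[OF diff_le_comp_list] by blast
lemma comp_list_diff: "set xs \<subseteq> Der \<iota> \<Longrightarrow> comp_list xs (x - y) = comp_list xs x - comp_list xs y"
  using diff_le_diff_app[OF diff_le_comp_list] by blast
lemma comp_list_zero: "set xs \<subseteq> Der \<iota> \<Longrightarrow> comp_list xs 0 = 0"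
  using comp_list_additive[of xs \<iota> 0 0] by simp

lemma diff_le_commutator: "\<delta> \<in> Der \<iota> \<Longrightarrow> diff_le \<iota> k \<phi> \<Longrightarrow> diff_le \<iota> k (\<lambda>x. \<phi> (\<delta> x) - \<delta> (\<phi> x))"
proof (induction k arbitrary: \<phi>)
  case 0
  then obtain a where a: "\<phi> = (\<lambda>x. a * x)" by (auto elim!: diff_le0E)
  have "(\<lambda>x. \<phi> (\<delta> x) - \<delta> (\<phi> x)) = (\<lambda>x. (- \<delta> a) * x)"
    using 0 by (auto simp: a Der_mult algebra_simps)
  then show ?case by (rule diff_le_eq_mult)
next
  case (Suc k)
  have kl: "klinear \<iota> (\<lambda>x. \<phi> (\<delta> x) - \<delta> (\<phi> x))"
    using klinear_minus[OF klinear_comp klinear_comp, of \<iota> \<phi> \<delta> \<delta> \<phi>] Suc.prems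
    by (simp add: diff_le_klinear Der_klinear comp_def)
  have ph: "\<And>x y. \<phi> (x + y) = \<phi> x + \<phi> y" using diff_le_additive[OF Suc.prems(2)] .
  have eq: "brk (\<lambda>x. \<phi> (\<delta> x) - \<delta> (\<phi> x)) b =
     (\<lambda>x. (brk \<phi> b (\<delta> x) - \<delta> (brk \<phi> b x)) + brk \<phi> (\<delta> b) x)" for b
  proof
    fix x
    have A: "\<phi> (\<delta> (b * x)) = \<phi> (b * \<delta> x) + \<phi> (\<delta> b * x)"
      using Der_mult[OF Suc.prems(1), of b x] ph by (simp add: mult.commute)
    have B: "\<delta> (\<phi> (b * x)) = \<delta> (brk \<phi> b x) + b * \<delta> (\<phi> x) + \<phi> x * \<delta> b"
    proof -
      have "\<phi> (b * x) = brk \<phi> b x + b * \<phi> x" by (simp add: brk_def)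
      then show ?thesis using Der_add[OF Suc.prems(1)] Der_mult[OF Suc.prems(1)] by simp
    qed
    have "brk (\<lambda>x. \<phi> (\<delta> x) - \<delta> (\<phi> x)) b x = \<phi> (\<delta> (b * x)) - \<delta> (\<phi> (b * x)) - b * (\<phi> (\<delta> x) - \<delta> (\<phi> x))"
      by (simp add: brk_def)
    also have "\<dots> = (\<phi> (b * \<delta> x) + \<phi> (\<delta> b * x)) - (\<delta> (brk \<phi> b x) + b * \<delta> (\<phi> x) + \<phi> x * \<delta> b) - b * (\<phi> (\<delta> x) - \<delta> (\<phi> x))"
      by (simp only: A B)
    also have "\<dots> = (\<phi> (b * \<delta> x) - b * \<phi> (\<delta> x) - \<delta> (brk \<phi> b x)) + (\<phi> (\<delta> b * x) - \<delta> b * \<phi> x)"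
      by (simp add: algebra_simps)
    also have "\<dots> = (brk \<phi> b (\<delta> x) - \<delta> (brk \<phi> b x)) + brk \<phi> (\<delta> b) x"
      by (simp add: brk_def)
    finally show "brk (\<lambda>x. \<phi> (\<delta> x) - \<delta> (\<phi> x)) b x =
     (brk \<phi> b (\<delta> x) - \<delta> (brk \<phi> b x)) + brk \<phi> (\<delta> b) x" .
  qed
  have "diff_le \<iota> k (\<lambda>x. (brk \<phi> b (\<delta> x) - \<delta> (brk \<phi> b x)) + brk \<phi> (\<delta> b) x)" for b
    using Suc.prems by (intro diff_le_plus Suc.IH) (auto simp: diff_le_Suc')
  then show ?case by (simp add: diff_le_Suc' kl eq)
qed

lemma diff_le_reduce: "diff_le \<iota> (Suc n) \<phi> \<Longrightarrow> (\<forall>as. length as = Suc n \<longrightarrow> brs \<phi> as 1 = 0) \<Longrightarrow> diff_le \<iota> n \<phi>"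
proof (induction n arbitrary: \<phi>)
  case 0
  have "\<phi> a = \<phi> 1 * a" for a
  proof -
    have "length [a] = Suc 0" by simp
    then have "brs \<phi> [a] 1 = 0" using 0(2) by blast
    then have "\<phi> (a * 1) - a * \<phi> 1 = 0" by (simp add: brk_def)
    then show ?thesis by (simp add: mult.commute)
  qed
  then have "\<phi> = (\<lambda>x. \<phi> 1 * x)" by (rule ext)
  then show ?case by (rule diff_le_eq_mult)
next
  case (Suc n)
  have kl: "klinear \<iota> \<phi>" using Suc.prems(1) by (simp add: diff_le_Suc')
  show ?case
  proof (subst diff_le_Suc', intro conjI allI kl)
    fix a
    show "diff_le \<iota> n (brk \<phi> a)"
    proof (rule Suc.IH)
      show "diff_le \<iota> (Suc n) (brk \<phi> a)" using Suc.prems(1) by (simp add: diff_le_Suc')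
      show "\<forall>as. length as = Suc n \<longrightarrow> brs (brk \<phi> a) as 1 = 0"
      proof -
        have "brs (brk \<phi> a) as 1 = 0" if "length as = Suc n" for as
          using Suc.prems(2) that by (metis brs.simps(2) length_Cons)
        then show ?thesis by blast
      qed
    qed
  qed
qed

lemma brk_swap: "brk (brk \<phi> a) b = brk (brk \<phi> b) a"
  by (auto simp: brk_def algebra_simps)

lemma brs_Cons_snoc: "brs \<phi> (a # as) = brs \<phi> (as @ [a])"
proof (induction as arbitrary: \<phi>)
  case Nil then show ?case by simp
next
  case (Cons b as)
  have "brs \<phi> (a # b # as) = brs (brk (brk \<phi> b) a) as" by (simp add: brk_swap)
  also have "\<dots> = brs (brk \<phi> b) (a # as)" by simp
  also have "\<dots> = brs (brk \<phi> b) (as @ [a])" by (rule Cons.IH)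
  finally show ?case by simp
qed

lemma brs_perm: "mset as = mset bs \<Longrightarrow> brs \<phi> as = brs \<phi> bs"
proof (induction as arbitrary: bs \<phi>)
  case Nil then show ?case by simp
next
  case (Cons a as)
  then have "a \<in> set bs" by (metis list.set_intros(1) set_mset_mset)
  then obtain bs1 bs2 where bs: "bs = bs1 @ a # bs2" by (meson split_list)
  have m: "mset as = mset (bs1 @ bs2)" using Cons.prems bs by simp
  have "brs \<phi> bs = brs (brs \<phi> (bs1 @ [a])) bs2" unfolding bs brs_append[symmetric] by simp
  also have "\<dots> = brs (brs \<phi> (a # bs1)) bs2" by (simp only: brs_Cons_snoc)
  also have "\<dots> = brs (brk \<phi> a) (bs1 @ bs2)" by (simp add: brs_append)
  also have "\<dots> = brs (brk \<phi> a) as" using Cons.IH[OF m] by simp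
  finally show ?case by simp
qed

lemma order1_der: "diff_le \<iota> 1 \<psi> \<Longrightarrow> (\<lambda>b. brk \<psi> b 1) \<in> Der \<iota>"
proof -
  assume a: "diff_le \<iota> 1 \<psi>"
  have kl: "klinear \<iota> \<psi>" using a by (simp add: diff_le_Suc')
  have m: "\<psi> (b * x) = b * \<psi> x + (\<psi> b - b * \<psi> 1) * x" for b x
  proof -
    have "diff_le \<iota> 0 (brk \<psi> b)" using a by (simp add: diff_le_Suc')
    then have "brk \<psi> b = (\<lambda>x. brk \<psi> b 1 * x)" by (auto elim!: diff_le0E)
    then have "brk \<psi> b x = brk \<psi> b 1 * x" by metis
    then show ?thesis by (simp add: brk_def algebra_simps)
  qed
  have add: "\<psi> (x + y) = \<psi> x + \<psi> y" for x y using kl by (simp add: klinear_def)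
  have hom: "\<psi> (\<iota> c * x) = \<iota> c * \<psi> x" for c x using kl by (simp add: klinear_def)
  show ?thesis unfolding Der_iff
  proof (intro conjI allI)
    fix x y
    show "brk \<psi> (x + y) 1 = brk \<psi> x 1 + brk \<psi> y 1" by (simp add: brk_def add algebra_simps)
    show "brk \<psi> (x * y) 1 = x * brk \<psi> y 1 + y * brk \<psi> x 1"
      using m[of x y] by (simp add: brk_def algebra_simps)
  next
    fix c x
    show "brk \<psi> (\<iota> c * x) 1 = \<iota> c * brk \<psi> x 1" by (simp add: brk_def hom right_diff_distrib mult.assoc)
  qed
qed

lemma symbol_der_last: "diff_le \<iota> (Suc k) \<phi> \<Longrightarrow> length as = k \<Longrightarrow> (\<lambda>b. brs \<phi> (as @ [b]) 1) \<in> Der \<iota>"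
proof -
  assume a: "diff_le \<iota> (Suc k) \<phi>" "length as = k"
  have "diff_le \<iota> (Suc k - length as) (brs \<phi> as)" using diff_le_brs[OF a(1), of as] a(2) by simp
  then have "diff_le \<iota> 1 (brs \<phi> as)" using a(2) by simp
  from order1_der[OF this] show ?thesis by (simp add: brs_append)
qed

lemma symbol_der: "diff_le \<iota> n \<phi> \<Longrightarrow> length as + length bs + 1 = n \<Longrightarrow> (\<lambda>b. brs \<phi> (as @ b # bs) 1) \<in> Der \<iota>"
proof -
  assume a: "diff_le \<iota> n \<phi>" "length as + length bs + 1 = n"
  have "brs \<phi> (as @ b # bs) = brs \<phi> ((as @ bs) @ [b])" for b by (rule brs_perm) simp
  moreover have "(\<lambda>b. brs \<phi> ((as @ bs) @ [b]) 1) \<in> Der \<iota>"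
    using a by (intro symbol_der_last[of \<iota> "length (as @ bs)"]) auto
  ultimately show ?thesis by simp
qed

definition rem :: "nat \<Rightarrow> 'b list \<Rightarrow> 'b list" where
  "rem i xs = take i xs @ drop (Suc i) xs"

lemma rem_0_Cons[simp]: "rem 0 (a # as) = as" by (simp add: rem_def)
lemma rem_Suc_Cons[simp]: "rem (Suc i) (a # as) = a # rem i as" by (simp add: rem_def)
lemma length_rem: "i < length xs \<Longrightarrow> length (rem i xs) = length xs - 1"
  by (simp add: rem_def)
lemma set_rem: "set (rem i xs) \<subseteq> set xs"
  unfolding rem_def using set_take_subset[of i xs] set_drop_subset[of "Suc i" xs] by auto
lemma mset_rem: "i < length xs \<Longrightarrow> mset (xs ! i # rem i xs) = mset xs"
proof -
  assume a: "i < length xs"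
  have "mset (xs ! i # rem i xs) = mset (take i xs @ xs ! i # drop (Suc i) xs)" by (simp add: rem_def)
  also have "take i xs @ xs ! i # drop (Suc i) xs = xs" by (rule id_take_nth_drop[OF a, symmetric])
  finally show ?thesis .
qed

fun symb :: "('a \<Rightarrow> 'a) list \<Rightarrow> 'a list \<Rightarrow> 'a::comm_ring_1" where
  "symb [] as = (if as = [] then 1 else 0)"
| "symb (d # ds) as = (\<Sum>i<length as. d (as ! i) * symb ds (rem i as))"

lemma brs_comp_der: "d \<in> Der \<iota> \<Longrightarrow>
  brs (d \<circ> \<psi>) as = (\<lambda>x. (\<Sum>i<length as. d (as ! i) * brs \<psi> (rem i as) x) + d (brs \<psi> as x))"
proof (induction as arbitrary: \<psi>)
  case Nil then show ?case by simp
next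
  case (Cons a as)
  have bk: "brk (d \<circ> \<psi>) a = (\<lambda>x. d a * \<psi> x + (d \<circ> brk \<psi> a) x)"
  proof
    fix x
    have e: "d (brk \<psi> a x) = d (\<psi> (a * x)) - (a * d (\<psi> x) + \<psi> x * d a)"
      unfolding brk_def by (simp only: Der_diff[OF Cons.prems] Der_mult[OF Cons.prems])
    show "brk (d \<circ> \<psi>) a x = d a * \<psi> x + (d \<circ> brk \<psi> a) x"
      by (simp only: o_apply e) (simp add: brk_def algebra_simps)
  qed
  have "brs (d \<circ> \<psi>) (a # as) = brs (\<lambda>x. d a * \<psi> x + (d \<circ> brk \<psi> a) x) as"
    by (simp add: bk)
  also have "\<dots> = (\<lambda>x. d a * brs \<psi> as x + brs (d \<circ> brk \<psi> a) as x)"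
    by (simp add: brs_plus brs_smult del: o_apply)
  also have "\<dots> = (\<lambda>x. d a * brs \<psi> as x + ((\<Sum>i<length as. d (as ! i) * brs (brk \<psi> a) (rem i as) x)
        + d (brs (brk \<psi> a) as x)))"
    by (simp only: Cons.IH[OF Cons.prems])
  also have "\<dots> = (\<lambda>x. (\<Sum>i<length (a # as). d ((a # as) ! i) * brs \<psi> (rem i (a # as)) x) + d (brs \<psi> (a # as) x))"
    unfolding length_Cons sum.lessThan_Suc_shift by (simp add: add.assoc)
  finally show ?case .
qed

lemma symb_brs: "set ds \<subseteq> Der \<iota> \<Longrightarrow> length as = length ds \<Longrightarrow> brs (comp_list ds) as 1 = symb ds as"
proof (induction ds arbitrary: as)
  case Nil then show ?case by simp
next
  case (Cons d ds)
  have d: "d \<in> Der \<iota>" and ds: "set ds \<subseteq> Der \<iota>" using Cons.prems by auto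
  have z: "brs (comp_list ds) as = (\<lambda>x. 0)"
    using brs_gt_len[OF diff_le_comp_list[OF ds]] Cons.prems by simp
  have "brs (comp_list (d # ds)) as 1 = (\<Sum>i<length as. d (as ! i) * brs (comp_list ds) (rem i as) 1) + d 0"
    using brs_comp_der[OF d, of "comp_list ds" as] z by simp
  also have "\<dots> = (\<Sum>i<length as. d (as ! i) * symb ds (rem i as))"
  proof -
    have "brs (comp_list ds) (rem i as) 1 = symb ds (rem i as)" if "i < length as" for i
      using Cons.IH[OF ds] that Cons.prems by (simp add: length_rem)
    then show ?thesis by (simp add: Der_zero[OF d])
  qed
  finally show ?case by (simp add: comp_def)
qed

lemma symb_Cons2: "symb ds (b # bs) = (\<Sum>k<length ds. (ds ! k) b * symb (rem k ds) bs)"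
proof (induction ds arbitrary: b bs)
  case Nil then show ?case by simp
next
  case (Cons d ds)
  have "symb (d # ds) (b # bs) = d b * symb ds bs + (\<Sum>i<length bs. d (bs ! i) * symb ds (b # rem i bs))"
    unfolding symb.simps length_Cons sum.lessThan_Suc_shift by simp
  also have "\<dots> = d b * symb ds bs + (\<Sum>i<length bs. \<Sum>k<length ds. d (bs ! i) * ((ds ! k) b * symb (rem k ds) (rem i bs)))"
    by (simp add: Cons.IH sum_distrib_left)
  also have "\<dots> = d b * symb ds bs + (\<Sum>k<length ds. \<Sum>i<length bs. (ds ! k) b * (d (bs ! i) * symb (rem k ds) (rem i bs)))"
    by (subst sum.swap) (simp only: mult.left_commute)
  also have "\<dots> = d b * symb ds bs + (\<Sum>k<length ds. (ds ! k) b * symb (d # rem k ds) bs)"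
    by (simp only: symb.simps(2) sum_distrib_left)
  also have "\<dots> = (\<Sum>k<length (d # ds). ((d # ds) ! k) b * symb (rem k (d # ds)) bs)"
    unfolding length_Cons sum.lessThan_Suc_shift by simp
  finally show ?case .
qed

lemma symb_wd: "set ds \<subseteq> Der \<iota> \<Longrightarrow> length as + length bs + 1 = length ds \<Longrightarrow>
  (\<lambda>b. symb ds (as @ b # bs)) \<in> Der \<iota>"
proof -
  assume a: "set ds \<subseteq> Der \<iota>" "length as + length bs + 1 = length ds"
  have "(\<lambda>b. brs (comp_list ds) (as @ b # bs) 1) \<in> Der \<iota>"
    by (rule symbol_der[OF diff_le_comp_list[OF a(1)] a(2)])
  moreover have "brs (comp_list ds) (as @ b # bs) 1 = symb ds (as @ b # bs)" for b
    using symb_brs[OF a(1)] a(2) by simp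
  ultimately show ?thesis by simp
qed

lemma symb_perm: "set ds \<subseteq> Der \<iota> \<Longrightarrow> length as = length ds \<Longrightarrow> mset as = mset bs \<Longrightarrow> symb ds as = symb ds bs"
proof -
  assume a: "set ds \<subseteq> Der \<iota>" "length as = length ds" "mset as = mset bs"
  have l: "length bs = length ds" using a(2,3) by (metis size_mset)
  have "symb ds as = brs (comp_list ds) as 1" using symb_brs[OF a(1,2)] by simp
  also have "\<dots> = brs (comp_list ds) bs 1" using brs_perm[OF a(3)] by simp
  also have "\<dots> = symb ds bs" using symb_brs[OF a(1) l] .
  finally show ?thesis .
qed

locale proj =
  fixes \<iota> :: "'k::comm_ring_1 \<Rightarrow> 'a::comm_ring_1"
    and m :: nat
    and s :: "('a \<Rightarrow> 'a) \<Rightarrow> nat \<Rightarrow> 'a"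
    and p :: "(nat \<Rightarrow> 'a) \<Rightarrow> 'a \<Rightarrow> 'a"
  assumes s_in: "\<And>\<delta>. \<delta> \<in> Der \<iota> \<Longrightarrow> s \<delta> \<in> free_fin m"
    and p_in: "\<And>v. v \<in> free_fin m \<Longrightarrow> p v \<in> Der \<iota>"
    and s_add: "\<And>\<delta> \<delta>'. \<delta> \<in> Der \<iota> \<Longrightarrow> \<delta>' \<in> Der \<iota> \<Longrightarrow> s (\<lambda>x. \<delta> x + \<delta>' x) = (\<lambda>i. s \<delta> i + s \<delta>' i)"
    and s_smult: "\<And>\<delta> a. \<delta> \<in> Der \<iota> \<Longrightarrow> s (\<lambda>x. a * \<delta> x) = (\<lambda>i. a * s \<delta> i)"
    and p_add: "\<And>v w. v \<in> free_fin m \<Longrightarrow> w \<in> free_fin m \<Longrightarrow> p (\<lambda>i. v i + w i) = (\<lambda>x. p v x + p w x)"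
    and p_smult: "\<And>v a. v \<in> free_fin m \<Longrightarrow> p (\<lambda>i. a * v i) = (\<lambda>x. a * p v x)"
    and ps: "\<And>\<delta>. \<delta> \<in> Der \<iota> \<Longrightarrow> p (s \<delta>) = \<delta>"
begin

abbreviation D where "D \<equiv> Der \<iota>"

definition unit :: "nat \<Rightarrow> nat \<Rightarrow> 'a" where "unit j = (\<lambda>i. if i = j then 1 else 0)"
definition E :: "nat \<Rightarrow> 'a \<Rightarrow> 'a" where "E j = p (unit j)"

lemma free_fin_0: "(\<lambda>i. 0) \<in> free_fin m" by (simp add: free_fin_def)
lemma free_fin_add: "v \<in> free_fin m \<Longrightarrow> w \<in> free_fin m \<Longrightarrow> (\<lambda>i. v i + w i) \<in> free_fin m"
  by (simp add: free_fin_def)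
lemma free_fin_smult: "v \<in> free_fin m \<Longrightarrow> (\<lambda>i. a * v i) \<in> free_fin m"
  by (simp add: free_fin_def)
lemma free_fin_sum: "finite S \<Longrightarrow> (\<And>j. j \<in> S \<Longrightarrow> v j \<in> free_fin m) \<Longrightarrow> (\<lambda>i. \<Sum>j\<in>S. g j * v j i) \<in> free_fin m"
  by (induction S rule: finite_induct) (auto simp: free_fin_def)
lemma unit_in: "j < m \<Longrightarrow> unit j \<in> free_fin m"
  by (simp add: free_fin_def unit_def)
lemma E_in: "j < m \<Longrightarrow> E j \<in> D"
  unfolding E_def by (rule p_in[OF unit_in])

lemma p_zero: "p (\<lambda>i. 0) = (\<lambda>x. 0)"
proof -
  have "p (\<lambda>i. 0 + 0) = (\<lambda>x. p (\<lambda>i. 0) x + p (\<lambda>i. 0) x)" by (rule p_add[OF free_fin_0 free_fin_0])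
  then have "p (\<lambda>i. 0) x = p (\<lambda>i. 0) x + p (\<lambda>i. 0) x" for x by (metis add_0)
  then show ?thesis by (auto simp: fun_eq_iff)
qed

lemma p_sum: "finite S \<Longrightarrow> (\<And>j. j \<in> S \<Longrightarrow> v j \<in> free_fin m) \<Longrightarrow>
  p (\<lambda>i. \<Sum>j\<in>S. g j * v j i) = (\<lambda>x. \<Sum>j\<in>S. g j * p (v j) x)"
proof (induction S rule: finite_induct)
  case empty then show ?case by (simp add: p_zero)
next
  case (insert j S)
  have vj: "v j \<in> free_fin m" using insert by simp
  have vS: "(\<lambda>i. \<Sum>j\<in>S. g j * v j i) \<in> free_fin m" using insert by (intro free_fin_sum) auto
  have "p (\<lambda>i. \<Sum>j\<in>insert j S. g j * v j i) = p (\<lambda>i. g j * v j i + (\<Sum>j\<in>S. g j * v j i))"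
    using insert by simp
  also have "\<dots> = (\<lambda>x. p (\<lambda>i. g j * v j i) x + p (\<lambda>i. \<Sum>j\<in>S. g j * v j i) x)"
    by (rule p_add[OF free_fin_smult[OF vj] vS])
  also have "\<dots> = (\<lambda>x. g j * p (v j) x + (\<Sum>j\<in>S. g j * p (v j) x))"
    using insert by (simp add: p_smult[OF vj])
  also have "\<dots> = (\<lambda>x. \<Sum>j\<in>insert j S. g j * p (v j) x)"
    using insert by simp
  finally show ?case .
qed

lemma s_zero: "s (\<lambda>x. 0) = (\<lambda>i. 0)"
proof -
  have "s (\<lambda>x. 0 + 0) = (\<lambda>i. s (\<lambda>x. 0) i + s (\<lambda>x. 0) i)" by (rule s_add[OF Der_0 Der_0])
  then have "s (\<lambda>x. 0) i = s (\<lambda>x. 0) i + s (\<lambda>x. 0) i" for i by (metis add_0)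
  then show ?thesis by (auto simp: fun_eq_iff)
qed

lemma s_sum: "finite S \<Longrightarrow> (\<And>i. i \<in> S \<Longrightarrow> d i \<in> D) \<Longrightarrow>
  s (\<lambda>x. \<Sum>i\<in>S. g i * d i x) = (\<lambda>j. \<Sum>i\<in>S. g i * s (d i) j)"
proof (induction S rule: finite_induct)
  case empty then show ?case by (simp add: s_zero)
next
  case (insert i S)
  have di: "d i \<in> D" using insert by simp
  have dS: "(\<lambda>x. \<Sum>i\<in>S. g i * d i x) \<in> D" using insert by (intro Der_sum) auto
  have "s (\<lambda>x. \<Sum>i\<in>insert i S. g i * d i x) = s (\<lambda>x. g i * d i x + (\<Sum>i\<in>S. g i * d i x))"
    using insert by simp
  also have "\<dots> = (\<lambda>j. s (\<lambda>x. g i * d i x) j + s (\<lambda>x. \<Sum>i\<in>S. g i * d i x) j)"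
    by (rule s_add[OF Der_smult[OF di] dS])
  also have "\<dots> = (\<lambda>j. g i * s (d i) j + (\<Sum>i\<in>S. g i * s (d i) j))"
    using insert by (simp add: s_smult[OF di])
  also have "\<dots> = (\<lambda>j. \<Sum>i\<in>insert i S. g i * s (d i) j)"
    using insert by simp
  finally show ?case .
qed

lemma s_expand: "\<delta> \<in> D \<Longrightarrow> s \<delta> = (\<lambda>i. \<Sum>j<m. s \<delta> j * unit j i)"
proof
  fix i assume d: "\<delta> \<in> D"
  have r: "(\<Sum>j<m. s \<delta> j * unit j i) = (if i < m then s \<delta> i else 0)"
    by (simp add: unit_def if_distrib[of "\<lambda>t. s \<delta> _ * t"] sum.delta' cong: if_cong)
  show "s \<delta> i = (\<Sum>j<m. s \<delta> j * unit j i)"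
  proof (cases "i < m")
    case True then show ?thesis using r by simp
  next
    case False then show ?thesis using r s_in[OF d] by (simp add: free_fin_def)
  qed
qed

lemma der_expand: "\<delta> \<in> D \<Longrightarrow> \<delta> x = (\<Sum>j<m. s \<delta> j * E j x)"
proof -
  assume d: "\<delta> \<in> D"
  have "\<delta> = p (s \<delta>)" using ps[OF d] by simp
  also have "\<dots> = p (\<lambda>i. \<Sum>j<m. s \<delta> j * unit j i)" using s_expand[OF d] by simp
  also have "\<dots> = (\<lambda>x. \<Sum>j<m. s \<delta> j * p (unit j) x)" by (rule p_sum) (auto intro: unit_in)
  finally have h: "\<delta> = (\<lambda>x. \<Sum>j<m. s \<delta> j * p (unit j) x)" .
  show ?thesis using fun_cong[OF h, of x] by (simp add: E_def)
qed

end

context proj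
begin

definition wd :: "nat \<Rightarrow> ('a list \<Rightarrow> 'a) \<Rightarrow> bool" where
  "wd n F \<longleftrightarrow> (\<forall>as bs. length as + length bs + 1 = n \<longrightarrow> (\<lambda>b. F (as @ b # bs)) \<in> D)"

fun coef :: "('a list \<Rightarrow> 'a) \<Rightarrow> nat list \<Rightarrow> 'a" where
  "coef F [] = F []"
| "coef F (j # J) = coef (\<lambda>bs. s (\<lambda>b. F (b # bs)) j) J"

lemma s_family: "(\<And>c. H c \<in> D) \<Longrightarrow> (\<And>b. (\<lambda>c. H c b) \<in> D) \<Longrightarrow> (\<lambda>c. s (H c) j) \<in> D"
proof -
  assume h1: "\<And>c. H c \<in> D" and h2: "\<And>b. (\<lambda>c. H c b) \<in> D"
  have add: "H (x + y) = (\<lambda>b. H x b + H y b)" for x y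
    using Der_add[OF h2] by (simp add: fun_eq_iff)
  have hom: "H (\<iota> c * x) = (\<lambda>b. \<iota> c * H x b)" for c x
    using Der_hom[OF h2] by (simp add: fun_eq_iff)
  have mul: "H (x * y) = (\<lambda>b. x * H y b + y * H x b)" for x y
    using Der_mult[OF h2] by (simp add: fun_eq_iff)
  show ?thesis unfolding Der_iff
  proof (intro conjI allI)
    fix x y
    show "s (H (x + y)) j = s (H x) j + s (H y) j"
      unfolding add s_add[OF h1 h1] by simp
    show "s (H (x * y)) j = x * s (H y) j + y * s (H x) j"
      unfolding mul s_add[OF Der_smult[OF h1] Der_smult[OF h1]] s_smult[OF h1] by simp
  next
    fix c x
    show "s (H (\<iota> c * x)) j = \<iota> c * s (H x) j"
      unfolding hom s_smult[OF h1] by simp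
  qed
qed

lemma wd_first: "wd (Suc n) F \<Longrightarrow> length bs = n \<Longrightarrow> (\<lambda>b. F (b # bs)) \<in> D"
proof -
  assume w: "wd (Suc n) F" and l: "length bs = n"
  have "length ([]::'a list) + length bs + 1 = Suc n" using l by simp
  then have "(\<lambda>b. F ([] @ b # bs)) \<in> D" using w unfolding wd_def by blast
  then show ?thesis by simp
qed

lemma wd_G: "wd (Suc n) F \<Longrightarrow> wd n (\<lambda>bs. s (\<lambda>b. F (b # bs)) j)"
  unfolding wd_def
proof (intro allI impI)
  fix as bs :: "'a list"
  assume w: "\<forall>as bs. length as + length bs + 1 = Suc n \<longrightarrow> (\<lambda>b. F (as @ b # bs)) \<in> D"
    and l: "length as + length bs + 1 = n"
  have h1: "(\<lambda>b. F (b # as @ c # bs)) \<in> D" for c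
    using w[rule_format, of "[]" "as @ c # bs"] l by simp
  have h2: "(\<lambda>c. F (b # as @ c # bs)) \<in> D" for b
    using w[rule_format, of "b # as" bs] l by simp
  show "(\<lambda>c. s (\<lambda>b. F (b # as @ c # bs)) j) \<in> D"
    by (rule s_family[of "\<lambda>c b. F (b # as @ c # bs)", OF h1 h2])
qed

lemma coef_cong: "(\<And>bs. length bs = length J \<Longrightarrow> F1 bs = F2 bs) \<Longrightarrow> coef F1 J = coef F2 J"
proof (induction J arbitrary: F1 F2)
  case Nil then show ?case by simp
next
  case (Cons j J)
  have "(\<lambda>b. F1 (b # bs)) = (\<lambda>b. F2 (b # bs))" if "length bs = length J" for bs
    using Cons.prems that by simp
  then show ?case by (simp only: coef.simps) (rule Cons.IH, simp)
qed

lemma coef_lin: "finite S \<Longrightarrow> (\<And>i. i \<in> S \<Longrightarrow> wd (length J) (F i)) \<Longrightarrow>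
  coef (\<lambda>bs. \<Sum>i\<in>S. g i * F i bs) J = (\<Sum>i\<in>S. g i * coef (F i) J)"
proof (induction J arbitrary: F)
  case Nil then show ?case by simp
next
  case (Cons j J)
  have d: "(\<lambda>b. F i (b # bs)) \<in> D" if "i \<in> S" "length bs = length J" for i bs
    using wd_first[of "length J" "F i" bs] Cons.prems(2)[OF that(1)] that(2) by simp
  have "coef (\<lambda>bs. \<Sum>i\<in>S. g i * F i bs) (j # J) = coef (\<lambda>bs. s (\<lambda>b. \<Sum>i\<in>S. g i * F i (b # bs)) j) J"
    by simp
  also have "\<dots> = coef (\<lambda>bs. \<Sum>i\<in>S. g i * s (\<lambda>b. F i (b # bs)) j) J"
  proof (rule coef_cong)
    fix bs :: "'a list" assume l: "length bs = length J"
    show "s (\<lambda>b. \<Sum>i\<in>S. g i * F i (b # bs)) j = (\<Sum>i\<in>S. g i * s (\<lambda>b. F i (b # bs)) j)"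
      using s_sum[OF Cons.prems(1), of "\<lambda>i b. F i (b # bs)" g] d l by simp
  qed
  also have "\<dots> = (\<Sum>i\<in>S. g i * coef (\<lambda>bs. s (\<lambda>b. F i (b # bs)) j) J)"
    by (rule Cons.IH[OF Cons.prems(1)]) (use Cons.prems(2) wd_G in auto)
  finally show ?case by simp
qed


definition LS :: "nat \<Rightarrow> nat list set" where "LS n = {J. set J \<subseteq> {..<m} \<and> length J = n}"

lemma finite_LS: "finite (LS n)"
  unfolding LS_def using finite_lists_length_eq[of "{..<m}" n] by simp

lemma LS_0: "LS 0 = {[]}" by (auto simp: LS_def)

lemma LS_Suc: "LS (Suc n) = (\<lambda>(j, J). j # J) ` ({..<m} \<times> LS n)"
proof
  show "LS (Suc n) \<subseteq> (\<lambda>(j, J). j # J) ` ({..<m} \<times> LS n)"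
  proof
    fix J assume "J \<in> LS (Suc n)"
    then obtain j J' where "J = j # J'" "j < m" "J' \<in> LS n"
      unfolding LS_def by (cases J) auto
    then show "J \<in> (\<lambda>(j, J). j # J) ` ({..<m} \<times> LS n)" by force
  qed
  show "(\<lambda>(j, J). j # J) ` ({..<m} \<times> LS n) \<subseteq> LS (Suc n)"
    by (auto simp: LS_def)
qed

lemma sum_LS_Suc: "(\<Sum>J\<in>LS (Suc n). f J) = (\<Sum>j<m. \<Sum>J\<in>LS n. f (j # J))"
proof -
  have inj: "inj_on (\<lambda>(j, J). j # J) ({..<m} \<times> LS n)" by (auto simp: inj_on_def)
  have "(\<Sum>J\<in>LS (Suc n). f J) = (\<Sum>x\<in>{..<m} \<times> LS n. f ((\<lambda>(j, J). j # J) x))"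
    unfolding LS_Suc using sum.reindex[OF inj, of f] by (simp add: comp_def)
  also have "\<dots> = (\<Sum>j<m. \<Sum>J\<in>LS n. f (j # J))"
    unfolding sum.cartesian_product by (rule sum.cong) auto
  finally show ?thesis .
qed

lemma LS_set: "J \<in> LS n \<Longrightarrow> set (map E J) \<subseteq> D"
  unfolding LS_def using E_in by auto
lemma LS_len: "J \<in> LS n \<Longrightarrow> length J = n"
  unfolding LS_def by auto

definition symmetric :: "('a list \<Rightarrow> 'a) \<Rightarrow> bool" where
  "symmetric F \<longleftrightarrow> (\<forall>xs ys. mset xs = mset ys \<longrightarrow> F xs = F ys)"

lemma symmetric_G: "symmetric F \<Longrightarrow> symmetric (\<lambda>bs. s (\<lambda>b. F (b # bs)) j)"
  unfolding symmetric_def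
proof (intro allI impI)
  fix xs ys :: "'a list" assume F: "\<forall>xs ys. mset xs = mset ys \<longrightarrow> F xs = F ys" and m: "mset xs = mset ys"
  have "F (b # xs) = F (b # ys)" for b using F m by simp
  then have "(\<lambda>b. F (b # xs)) = (\<lambda>b. F (b # ys))" by simp
  then show "s (\<lambda>b. F (b # xs)) j = s (\<lambda>b. F (b # ys)) j" by simp
qed

lemma sym_main: "wd n F \<Longrightarrow> symmetric F \<Longrightarrow> length as = n \<Longrightarrow>
  (\<Sum>J\<in>LS n. coef F J * symb (map E J) as) = of_nat (fact n) * F as"
proof (induction n arbitrary: F as)
  case 0 then show ?case by (simp add: LS_0)
next
  case (Suc n)
  define G where "G j = (\<lambda>bs. s (\<lambda>b. F (b # bs)) j)" for j
  have Gw: "wd n (G j)" for j unfolding G_def by (rule wd_G[OF Suc.prems(1)])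
  have Gs: "symmetric (G j)" for j unfolding G_def by (rule symmetric_G[OF Suc.prems(2)])
  have lr: "length (rem i as) = n" if "i < Suc n" for i using Suc.prems(3) that by (simp add: length_rem)
  have A: "(\<Sum>J\<in>LS n. coef (G j) J * symb (E j # map E J) as)
      = (\<Sum>i<Suc n. E j (as ! i) * (of_nat (fact n) * G j (rem i as)))" for j
  proof -
    have "(\<Sum>J\<in>LS n. coef (G j) J * symb (E j # map E J) as)
        = (\<Sum>J\<in>LS n. \<Sum>i<Suc n. E j (as ! i) * (coef (G j) J * symb (map E J) (rem i as)))"
      by (simp only: symb.simps(2) Suc.prems(3) sum_distrib_left mult.left_commute)
    also have "\<dots> = (\<Sum>i<Suc n. E j (as ! i) * (\<Sum>J\<in>LS n. coef (G j) J * symb (map E J) (rem i as)))"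
      by (subst sum.swap) (simp add: sum_distrib_left del: sum.lessThan_Suc)
    also have "\<dots> = (\<Sum>i<Suc n. E j (as ! i) * (of_nat (fact n) * G j (rem i as)))"
      by (rule sum.cong[OF refl]) (simp add: Suc.IH[OF Gw Gs lr] del: sum.lessThan_Suc)
    finally show ?thesis .
  qed
  have B: "(\<Sum>j<m. G j (rem i as) * E j (as ! i)) = F as" if "i < Suc n" for i
  proof -
    have d: "(\<lambda>b. F (b # rem i as)) \<in> D" by (rule wd_first[OF Suc.prems(1) lr[OF that]])
    have "(\<Sum>j<m. G j (rem i as) * E j (as ! i)) = F (as ! i # rem i as)"
      using der_expand[OF d, of "as ! i"] by (simp add: G_def)
    also have "\<dots> = F as"
    proof -
      have "mset (as ! i # rem i as) = mset as" using mset_rem[of i as] Suc.prems(3) that by simp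
      then show ?thesis using Suc.prems(2) unfolding symmetric_def by blast
    qed
    finally show ?thesis .
  qed
  have "(\<Sum>J\<in>LS (Suc n). coef F J * symb (map E J) as)
      = (\<Sum>j<m. \<Sum>J\<in>LS n. coef (G j) J * symb (E j # map E J) as)"
    by (simp add: sum_LS_Suc G_def del: sum.lessThan_Suc)
  also have "\<dots> = (\<Sum>j<m. \<Sum>i<Suc n. E j (as ! i) * (of_nat (fact n) * G j (rem i as)))"
    by (simp only: A)
  also have "\<dots> = (\<Sum>i<Suc n. of_nat (fact n) * (\<Sum>j<m. G j (rem i as) * E j (as ! i)))"
    by (subst sum.swap) (simp add: sum_distrib_left mult_ac del: sum.lessThan_Suc)
  also have "\<dots> = (\<Sum>i<Suc n. of_nat (fact n) * F as)"
    by (rule sum.cong[OF refl]) (simp add: B del: sum.lessThan_Suc)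
  also have "\<dots> = of_nat (fact (Suc n)) * F as"
    by (simp add: algebra_simps)
  finally show ?case .
qed

end

section \<open>The relation module\<close>

definition eqv :: "('k::comm_ring_1 \<Rightarrow> 'a::comm_ring_1) \<Rightarrow> nat \<Rightarrow> (('a \<Rightarrow> 'a) list \<Rightarrow> 'a) \<Rightarrow> (('a \<Rightarrow> 'a) list \<Rightarrow> 'a) \<Rightarrow> bool" where
  "eqv \<iota> n c d \<longleftrightarrow> sym_rel_p \<iota> n (\<lambda>zs. c zs - d zs)"

lemma R_eq: "sym_rel_p \<iota> n c \<Longrightarrow> c = d \<Longrightarrow> sym_rel_p \<iota> n d" by simp

lemma R_minus: "sym_rel_p \<iota> n c \<Longrightarrow> sym_rel_p \<iota> n d \<Longrightarrow> sym_rel_p \<iota> n (\<lambda>zs. c zs - d zs)"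
proof -
  assume a: "sym_rel_p \<iota> n c" "sym_rel_p \<iota> n d"
  have "sym_rel_p \<iota> n (\<lambda>zs. c zs + (\<lambda>zs. (-1) * d zs) zs)"
    by (rule sym_rel_p.add[OF a(1) sym_rel_p.smult[OF a(2)]])
  then show ?thesis by (rule R_eq) (simp add: fun_eq_iff)
qed

lemma R_sum: "finite S \<Longrightarrow> (\<And>i. i \<in> S \<Longrightarrow> sym_rel_p \<iota> n (f i)) \<Longrightarrow> sym_rel_p \<iota> n (\<lambda>zs. \<Sum>i\<in>S. g i * f i zs)"
proof (induction S rule: finite_induct)
  case empty
  then show ?case using sym_rel_p.zero by simp
next
  case (insert i S)
  have "sym_rel_p \<iota> n (\<lambda>zs. (\<lambda>zs. g i * f i zs) zs + (\<lambda>zs. \<Sum>i\<in>S. g i * f i zs) zs)"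
    using insert by (intro sym_rel_p.add sym_rel_p.smult) auto
  then show ?case by (rule R_eq) (simp add: fun_eq_iff insert)
qed

lemma eqv_refl: "eqv \<iota> n c c"
  unfolding eqv_def using sym_rel_p.zero by simp

lemma eqv_sym: "eqv \<iota> n c d \<Longrightarrow> eqv \<iota> n d c"
  unfolding eqv_def by (drule sym_rel_p.smult[where a="-1"]) (simp add: algebra_simps)

lemma eqv_trans: "eqv \<iota> n c d \<Longrightarrow> eqv \<iota> n d e \<Longrightarrow> eqv \<iota> n c e"
  unfolding eqv_def by (drule (1) sym_rel_p.add) simp

lemma eqv_add: "eqv \<iota> n c d \<Longrightarrow> eqv \<iota> n c' d' \<Longrightarrow> eqv \<iota> n (\<lambda>zs. c zs + c' zs) (\<lambda>zs. d zs + d' zs)"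
  unfolding eqv_def by (drule (1) sym_rel_p.add) (simp add: algebra_simps)

lemma eqv_smult: "eqv \<iota> n c d \<Longrightarrow> eqv \<iota> n (\<lambda>zs. a * c zs) (\<lambda>zs. a * d zs)"
  unfolding eqv_def by (drule sym_rel_p.smult[where a=a]) (simp add: algebra_simps)

lemma eqv_sum:
  assumes "finite S" and "\<And>i. i \<in> S \<Longrightarrow> eqv \<iota> n (f i) (h i)"
  shows "eqv \<iota> n (\<lambda>zs. \<Sum>i\<in>S. g i * f i zs) (\<lambda>zs. \<Sum>i\<in>S. g i * h i zs)"
proof -
  have "sym_rel_p \<iota> n (\<lambda>zs. \<Sum>i\<in>S. g i * (\<lambda>zs. f i zs - h i zs) zs)"
    by (rule R_sum) (use assms in \<open>auto simp: eqv_def\<close>)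
  then show ?thesis unfolding eqv_def
    by (rule R_eq) (simp add: fun_eq_iff right_diff_distrib sum_subtractf)
qed

lemma eqv_R: "eqv \<iota> n c (\<lambda>zs. 0) \<Longrightarrow> sym_rel_p \<iota> n c"
  unfolding eqv_def by simp

lemma eqv_fun_eq: "eqv \<iota> n c d \<Longrightarrow> c = c' \<Longrightarrow> d = d' \<Longrightarrow> eqv \<iota> n c' d'" by simp

lemma single_zero_slot: "set xs \<subseteq> Der \<iota> \<Longrightarrow> set ys \<subseteq> Der \<iota> \<Longrightarrow> length xs + length ys + 1 = n \<Longrightarrow>
  eqv \<iota> n (single (xs @ [(\<lambda>x. 0)] @ ys)) (\<lambda>zs. 0)"
proof -
  assume a: "set xs \<subseteq> Der \<iota>" "set ys \<subseteq> Der \<iota>" "length xs + length ys + 1 = n"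
  have "sym_rel_p \<iota> n (\<lambda>zs. single (xs @ [(\<lambda>x. (\<lambda>x. 0) x + (\<lambda>x. 0) x)] @ ys) zs - single (xs @ [(\<lambda>x. 0)] @ ys) zs
           - single (xs @ [(\<lambda>x. 0)] @ ys) zs)"
    by (rule sym_rel_p.additive[OF a(1,2) Der_0 Der_0 a(3)])
  then have "sym_rel_p \<iota> n (\<lambda>zs. (-1) * (single (xs @ [(\<lambda>x. 0)] @ ys) zs - single (xs @ [(\<lambda>x. 0)] @ ys) zs
           - single (xs @ [(\<lambda>x. 0)] @ ys) zs))"
    by (intro sym_rel_p.smult) simp
  then show ?thesis unfolding eqv_def by (rule R_eq) (simp add: fun_eq_iff)
qed

lemma single_slot_sum: "finite S \<Longrightarrow> set xs \<subseteq> Der \<iota> \<Longrightarrow> set ys \<subseteq> Der \<iota> \<Longrightarrow> length xs + length ys + 1 = n \<Longrightarrow>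
  (\<And>i. i \<in> S \<Longrightarrow> d i \<in> Der \<iota>) \<Longrightarrow>
  eqv \<iota> n (single (xs @ [(\<lambda>x. \<Sum>i\<in>S. g i * d i x)] @ ys)) (\<lambda>zs. \<Sum>i\<in>S. g i * single (xs @ [d i] @ ys) zs)"
proof (induction S rule: finite_induct)
  case empty
  then show ?case using single_zero_slot[of xs \<iota> ys n] by simp
next
  case (insert i S)
  have di: "d i \<in> Der \<iota>" using insert by simp
  have dS: "(\<lambda>x. \<Sum>i\<in>S. g i * d i x) \<in> Der \<iota>" using insert by (intro Der_sum) auto
  have e1: "eqv \<iota> n (single (xs @ [(\<lambda>x. (\<lambda>x. g i * d i x) x + (\<lambda>x. \<Sum>i\<in>S. g i * d i x) x)] @ ys))
     (\<lambda>zs. single (xs @ [(\<lambda>x. g i * d i x)] @ ys) zs + single (xs @ [(\<lambda>x. \<Sum>i\<in>S. g i * d i x)] @ ys) zs)"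
    unfolding eqv_def
    by (rule R_eq[OF sym_rel_p.additive[OF insert.prems(1,2) Der_smult[OF di, where a="g i"] dS insert.prems(3)]])
      (simp add: fun_eq_iff)
  have e2: "eqv \<iota> n (single (xs @ [(\<lambda>x. g i * d i x)] @ ys)) (\<lambda>zs. g i * single (xs @ [d i] @ ys) zs)"
    unfolding eqv_def by (rule sym_rel_p.homogeneous[OF insert.prems(1,2) di insert.prems(3)])
  have e3: "eqv \<iota> n (single (xs @ [(\<lambda>x. \<Sum>i\<in>S. g i * d i x)] @ ys)) (\<lambda>zs. \<Sum>i\<in>S. g i * single (xs @ [d i] @ ys) zs)"
    using insert by auto
  have "eqv \<iota> n (\<lambda>zs. single (xs @ [(\<lambda>x. g i * d i x)] @ ys) zs + single (xs @ [(\<lambda>x. \<Sum>i\<in>S. g i * d i x)] @ ys) zs)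
     (\<lambda>zs. g i * single (xs @ [d i] @ ys) zs + (\<Sum>i\<in>S. g i * single (xs @ [d i] @ ys) zs))"
    by (rule eqv_add[OF e2 e3])
  from eqv_trans[OF e1 this] show ?case
    by (rule eqv_fun_eq) (simp_all add: insert fun_eq_iff)
qed

definition pre :: "('a \<Rightarrow> 'a) \<Rightarrow> (('a \<Rightarrow> 'a) list \<Rightarrow> 'a::comm_ring_1) \<Rightarrow> ('a \<Rightarrow> 'a) list \<Rightarrow> 'a" where
  "pre d c = (\<lambda>zs. case zs of [] \<Rightarrow> 0 | z # zs' \<Rightarrow> if z = d then c zs' else 0)"

lemma pre_single: "pre d (single xs) = single (d # xs)"
  by (auto simp: pre_def single_def fun_eq_iff split: list.split)

lemma pre_f: "f 0 0 = 0 \<Longrightarrow> pre d (\<lambda>zs. f (c1 zs) (c2 zs)) = (\<lambda>zs. f (pre d c1 zs) (pre d c2 zs))"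
  by (auto simp: pre_def fun_eq_iff split: list.split)

lemma pre_f3: "f 0 0 0 = 0 \<Longrightarrow> pre d (\<lambda>zs. f (c1 zs) (c2 zs) (c3 zs)) = (\<lambda>zs. f (pre d c1 zs) (pre d c2 zs) (pre d c3 zs))"
  by (auto simp: pre_def fun_eq_iff split: list.split)

lemma pre_sum: "pre d (\<lambda>zs. \<Sum>i\<in>S. g i * c i zs) = (\<lambda>zs. \<Sum>i\<in>S. g i * pre d (c i) zs)"
  unfolding pre_def by (rule ext) (simp split: list.split)

lemma pre_smult: "pre d (\<lambda>zs. a * c zs) = (\<lambda>zs. a * pre d c zs)"
  by (auto simp: pre_def fun_eq_iff split: list.split)

lemma R_pre: "sym_rel_p \<iota> n c \<Longrightarrow> d \<in> Der \<iota> \<Longrightarrow> sym_rel_p \<iota> (Suc n) (pre d c)"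
proof (induction rule: sym_rel_p.induct)
  case zero
  have "pre d (\<lambda>zs. 0) = (\<lambda>zs. 0)" by (auto simp: pre_def fun_eq_iff split: list.split)
  then show ?case using sym_rel_p.zero by simp
next
  case (add c c')
  then show ?case using sym_rel_p.add[OF add.IH] by (simp add: pre_f[of "(+)"])
next
  case (smult c a)
  then show ?case using sym_rel_p.smult[OF smult.IH] by (simp add: pre_smult)
next
  case (additive xs ys \<delta> \<delta>')
  have "sym_rel_p \<iota> (Suc n) (\<lambda>zs. single ((d # xs) @ [(\<lambda>x. \<delta> x + \<delta>' x)] @ ys) zs - single ((d # xs) @ [\<delta>] @ ys) zs
           - single ((d # xs) @ [\<delta>'] @ ys) zs)"
    using additive by (intro sym_rel_p.additive) auto
  then show ?case by (simp add: pre_f3[of "\<lambda>a b c. a - b - c"] pre_single)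
next
  case (homogeneous xs ys \<delta> a)
  have "sym_rel_p \<iota> (Suc n) (\<lambda>zs. single ((d # xs) @ [(\<lambda>x. a * \<delta> x)] @ ys) zs - a * single ((d # xs) @ [\<delta>] @ ys) zs)"
    using homogeneous by (intro sym_rel_p.homogeneous) auto
  then show ?case by (simp add: pre_f[of "\<lambda>u v. u - a * v"] pre_single)
next
  case (symmetric xs ys)
  have "sym_rel_p \<iota> (Suc n) (\<lambda>zs. single (d # xs) zs - single (d # ys) zs)"
    using symmetric by (intro sym_rel_p.symmetric) auto
  then show ?case by (simp add: pre_f[of "(-)"] pre_single)
qed

lemma eqv_pre: "eqv \<iota> n c c' \<Longrightarrow> d \<in> Der \<iota> \<Longrightarrow> eqv \<iota> (Suc n) (pre d c) (pre d c')"
  unfolding eqv_def by (drule (1) R_pre) (simp add: pre_f[of "(-)"])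

abbreviation fin :: "(('a \<Rightarrow> 'a) list \<Rightarrow> 'a::comm_ring_1) \<Rightarrow> bool" where
  "fin c \<equiv> finite {xs. c xs \<noteq> 0}"

lemma fin_single: "fin (single A)"
proof -
  have "{xs. single A xs \<noteq> 0} \<subseteq> {A}" by (auto simp: single_def)
  then show ?thesis using finite_subset by blast
qed

lemma fin_zero: "fin (\<lambda>zs. 0)" by simp

lemma fin_add: "fin c \<Longrightarrow> fin d \<Longrightarrow> fin (\<lambda>zs. c zs + d zs)"
proof -
  assume "fin c" "fin d"
  moreover have "{xs. c xs + d xs \<noteq> 0} \<subseteq> {xs. c xs \<noteq> 0} \<union> {xs. d xs \<noteq> 0}" by auto
  ultimately show ?thesis using finite_subset by blast
qed

lemma fin_smult: "fin c \<Longrightarrow> fin (\<lambda>zs. a * c zs)"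
proof -
  assume "fin c"
  moreover have "{xs. a * c xs \<noteq> 0} \<subseteq> {xs. c xs \<noteq> 0}" by auto
  ultimately show ?thesis using finite_subset by blast
qed

lemma fin_sum: "finite I \<Longrightarrow> (\<And>i. i \<in> I \<Longrightarrow> fin (c i)) \<Longrightarrow> fin (\<lambda>zs. \<Sum>i\<in>I. g i * c i zs)"
proof (induction I rule: finite_induct)
  case empty then show ?case by simp
next
  case (insert i I)
  then show ?case using fin_add[OF fin_smult[of "c i" "g i"], of "\<lambda>zs. \<Sum>i\<in>I. g i * c i zs"] by simp
qed

lemma tau_eq: "finite T \<Longrightarrow> {xs. c xs \<noteq> 0} \<subseteq> T \<Longrightarrow> tau c = (\<lambda>x. \<Sum>xs\<in>T. c xs * comp_list xs x)"
  unfolding tau_def by (rule ext, rule sum.mono_neutral_left) auto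

lemma tau_add: "fin c \<Longrightarrow> fin d \<Longrightarrow> tau (\<lambda>zs. c zs + d zs) = (\<lambda>x. tau c x + tau d x)"
proof -
  assume a: "fin c" "fin d"
  let ?T = "{xs. c xs \<noteq> 0} \<union> {xs. d xs \<noteq> 0}"
  have f: "finite ?T" using a by simp
  have "tau (\<lambda>zs. c zs + d zs) = (\<lambda>x. \<Sum>xs\<in>?T. (c xs + d xs) * comp_list xs x)"
    by (rule tau_eq[OF f]) auto
  moreover have "tau c = (\<lambda>x. \<Sum>xs\<in>?T. c xs * comp_list xs x)" by (rule tau_eq[OF f]) auto
  moreover have "tau d = (\<lambda>x. \<Sum>xs\<in>?T. d xs * comp_list xs x)" by (rule tau_eq[OF f]) auto
  ultimately show ?thesis by (simp add: distrib_right sum.distrib)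
qed

lemma tau_smult: "fin c \<Longrightarrow> tau (\<lambda>zs. a * c zs) = (\<lambda>x. a * tau c x)"
proof -
  assume a: "fin c"
  let ?T = "{xs. c xs \<noteq> 0}"
  have "tau (\<lambda>zs. a * c zs) = (\<lambda>x. \<Sum>xs\<in>?T. (a * c xs) * comp_list xs x)"
    by (rule tau_eq[OF a]) auto
  moreover have "tau c = (\<lambda>x. \<Sum>xs\<in>?T. c xs * comp_list xs x)" by (rule tau_eq[OF a]) auto
  ultimately show ?thesis by (simp add: sum_distrib_left mult.assoc)
qed

lemma tau_single: "tau (single A) = comp_list A"
proof -
  have "tau (single A) = (\<lambda>x. \<Sum>xs\<in>{A}. single A xs * comp_list xs x)"
    by (rule tau_eq) (auto simp: single_def)
  then show ?thesis by (simp add: single_def)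
qed

lemma tau_zero: "tau (\<lambda>zs. 0) = (\<lambda>x. 0)"
  by (simp add: tau_def)

lemma tau_sum: "finite I \<Longrightarrow> (\<And>i. i \<in> I \<Longrightarrow> fin (c i)) \<Longrightarrow>
  tau (\<lambda>zs. \<Sum>i\<in>I. g i * c i zs) = (\<lambda>x. \<Sum>i\<in>I. g i * tau (c i) x)"
proof (induction I rule: finite_induct)
  case empty then show ?case by (simp add: tau_zero)
next
  case (insert i I)
  have "tau (\<lambda>zs. \<Sum>i\<in>insert i I. g i * c i zs) = tau (\<lambda>zs. (\<lambda>zs. g i * c i zs) zs + (\<lambda>zs. \<Sum>i\<in>I. g i * c i zs) zs)"
    using insert by simp
  also have "\<dots> = (\<lambda>x. tau (\<lambda>zs. g i * c i zs) x + tau (\<lambda>zs. \<Sum>i\<in>I. g i * c i zs) x)"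
    using insert by (intro tau_add fin_smult fin_sum) auto
  also have "\<dots> = (\<lambda>x. \<Sum>i\<in>insert i I. g i * tau (c i) x)"
    using insert by (simp add: tau_smult)
  finally show ?case .
qed

lemma tau_diff: "fin c \<Longrightarrow> fin d \<Longrightarrow> tau (\<lambda>zs. c zs - d zs) = (\<lambda>x. tau c x - tau d x)"
proof -
  assume a: "fin c" "fin d"
  have t2: "tau (\<lambda>zs. (-1) * d zs) = (\<lambda>x. (-1) * tau d x)" by (rule tau_smult[OF a(2)])
  have "tau (\<lambda>zs. c zs - d zs) = tau (\<lambda>zs. c zs + (\<lambda>zs. (-1) * d zs) zs)"
    by (rule arg_cong[where f=tau]) simp
  also have "\<dots> = (\<lambda>x. tau c x + tau (\<lambda>zs. (-1) * d zs) x)"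
    by (rule tau_add[OF a(1) fin_smult[OF a(2)]])
  also have "\<dots> = (\<lambda>x. tau c x + (-1) * tau d x)" by (simp only: t2)
  also have "\<dots> = (\<lambda>x. tau c x - tau d x)" by simp
  finally show ?thesis .
qed

lemma sym_free_iff: "c \<in> sym_free \<iota> n \<longleftrightarrow> fin c \<and> (\<forall>xs. c xs \<noteq> 0 \<longrightarrow> length xs = n \<and> set xs \<subseteq> Der \<iota>)"
  by (simp add: sym_free_def)

lemma clause1: "c \<in> sym_free \<iota> n \<Longrightarrow> diff_le \<iota> n (tau c)"
  unfolding tau_def sym_free_iff
  by (rule diff_le_sum) (auto intro: diff_le_comp_list[of _ \<iota>, simplified])

lemma dl_zero: "diff_lower \<iota> n (\<lambda>x. 0)"
  by (cases n) (auto simp: diff_lower_def diff_le_zero)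
lemma dl_plus: "diff_lower \<iota> n \<phi> \<Longrightarrow> diff_lower \<iota> n \<psi> \<Longrightarrow> diff_lower \<iota> n (\<lambda>x. \<phi> x + \<psi> x)"
  by (cases n) (auto simp: diff_lower_def diff_le_plus)
lemma dl_smult: "diff_lower \<iota> n \<phi> \<Longrightarrow> diff_lower \<iota> n (\<lambda>x. a * \<phi> x)"
  by (cases n) (auto simp: diff_lower_def diff_le_smult)

lemma diff_le_neg: "diff_le \<iota> n \<phi> \<Longrightarrow> diff_le \<iota> n (\<lambda>x. - \<phi> x)"
  using diff_le_smult[of \<iota> n \<phi> "-1"] by simp

lemma perm_lower: "set xs \<subseteq> Der \<iota> \<Longrightarrow> mset ys = mset xs \<Longrightarrow> xs \<noteq> [] \<Longrightarrow>
  diff_le \<iota> (length xs - 1) (\<lambda>x. comp_list xs x - comp_list ys x)"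
proof (induction xs arbitrary: ys)
  case Nil then show ?case by simp
next
  case (Cons d xs)
  have d: "d \<in> Der \<iota>" and xsD: "set xs \<subseteq> Der \<iota>" using Cons.prems by auto
  have "d \<in> set ys" using Cons.prems(2) by (metis list.set_intros(1) set_mset_mset)
  then obtain ys1 ys2 where ys: "ys = ys1 @ d # ys2" by (meson split_list)
  have m: "mset (ys1 @ ys2) = mset xs" using Cons.prems(2) ys by simp
  have ysD: "set (ys1 @ ys2) \<subseteq> Der \<iota>" using xsD m by (metis set_mset_mset)
  have l: "length (ys1 @ ys2) = length xs" using m by (metis size_mset)
  have t1: "diff_le \<iota> (length xs) (\<lambda>x. d (comp_list xs x) - d (comp_list (ys1 @ ys2) x))"
  proof (cases "xs = []")
    case True
    then have "ys1 @ ys2 = []" using l by simp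
    then show ?thesis using True by (simp add: diff_le_zero)
  next
    case False
    have "diff_le \<iota> (1 + (length xs - 1)) (d \<circ> (\<lambda>x. comp_list xs x - comp_list (ys1 @ ys2) x))"
      by (rule diff_le_comp[OF Der_diff_le1[OF d] Cons.IH[OF xsD m False]])
    moreover have "1 + (length xs - 1) = length xs" using False by simp
    ultimately show ?thesis by (simp add: comp_def Der_diff[OF d])
  qed
  have t2: "diff_le \<iota> (length xs) (\<lambda>x. d (comp_list (ys1 @ ys2) x) - comp_list ys x)"
  proof -
    have c: "diff_le \<iota> (length ys1) (\<lambda>x. comp_list ys1 (d x) - d (comp_list ys1 x))"
      using ysD by (intro diff_le_commutator[OF d] diff_le_comp_list) auto
    have "diff_le \<iota> (length ys1 + length ys2) ((\<lambda>x. comp_list ys1 (d x) - d (comp_list ys1 x)) \<circ> comp_list ys2)"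
      using ysD by (intro diff_le_comp[OF c] diff_le_comp_list) auto
    then have "diff_le \<iota> (length xs) (\<lambda>x. - (comp_list ys1 (d (comp_list ys2 x)) - d (comp_list ys1 (comp_list ys2 x))))"
      using l by (intro diff_le_neg) (simp add: comp_def)
    then show ?thesis by (simp add: ys comp_list_append)
  qed
  have "diff_le \<iota> (length xs) (\<lambda>x. (d (comp_list xs x) - d (comp_list (ys1 @ ys2) x)) + (d (comp_list (ys1 @ ys2) x) - comp_list ys x))"
    by (rule diff_le_plus[OF t1 t2])
  then show ?case by simp
qed

lemma comp_slot: "comp_list (xs @ d # ys) x = comp_list xs (d (comp_list ys x))"
  by (simp add: comp_list_append)

lemma clause2_aux: "sym_rel_p \<iota> n c \<Longrightarrow> fin c \<and> diff_lower \<iota> n (tau c)"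
proof (induction rule: sym_rel_p.induct)
  case zero then show ?case by (simp add: tau_zero dl_zero)
next
  case (add c d)
  then show ?case by (simp add: fin_add tau_add dl_plus)
next
  case (smult c a)
  then show ?case by (simp add: fin_smult tau_smult dl_smult)
next
  case (additive xs ys \<delta> \<delta>')
  let ?A = "xs @ [(\<lambda>x. \<delta> x + \<delta>' x)] @ ys" and ?B = "xs @ [\<delta>] @ ys" and ?C = "xs @ [\<delta>'] @ ys"
  have f: "fin (\<lambda>zs. single ?A zs - single ?B zs - single ?C zs)"
    using fin_add[OF fin_add[OF fin_single fin_smult[OF fin_single]] fin_smult[OF fin_single], of ?A "-1" ?B "-1" ?C]
    by simp
  have "tau (\<lambda>zs. single ?A zs - single ?B zs - single ?C zs) = (\<lambda>x. comp_list ?A x - comp_list ?B x - comp_list ?C x)"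
    using tau_diff[OF fin_add[OF fin_single fin_smult[OF fin_single]] fin_single, of ?A "-1" ?B ?C]
      tau_add[OF fin_single fin_smult[OF fin_single], of ?A "-1" ?B] tau_smult[OF fin_single, of "-1" ?B]
    by (simp add: tau_single)
  also have "\<dots> = (\<lambda>x. 0)"
    using additive by (simp add: comp_slot comp_list_additive)
  finally show ?case using f dl_zero by simp
next
  case (homogeneous xs ys \<delta> a)
  let ?A = "xs @ [(\<lambda>x. a * \<delta> x)] @ ys" and ?B = "xs @ [\<delta>] @ ys"
  have f: "fin (\<lambda>zs. single ?A zs - a * single ?B zs)"
    using fin_add[OF fin_single fin_smult[OF fin_single], of ?A "- a" ?B] by simp
  have "tau (\<lambda>zs. single ?A zs - a * single ?B zs) = (\<lambda>x. comp_list ?A x - a * comp_list ?B x)"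
    using tau_diff[OF fin_single fin_smult[OF fin_single], of ?A a ?B] tau_smult[OF fin_single, of a ?B]
    by (simp add: tau_single)
  also have "\<dots> = (\<lambda>x. brk (comp_list xs) a (\<delta> (comp_list ys x)))"
    by (simp add: comp_slot brk_def)
  finally have t: "tau (\<lambda>zs. single ?A zs - a * single ?B zs) = (\<lambda>x. brk (comp_list xs) a (\<delta> (comp_list ys x)))" .
  have "diff_lower \<iota> n (\<lambda>x. brk (comp_list xs) a (\<delta> (comp_list ys x)))"
  proof (cases xs)
    case Nil
    then show ?thesis by (simp add: brk_def dl_zero)
  next
    case (Cons x xs')
    have b: "diff_le \<iota> (length xs') (brk (comp_list xs) a)"
      using diff_le_comp_list[of xs \<iota>] homogeneous Cons by (simp add: diff_le_Suc')
    have c: "diff_le \<iota> (Suc (length ys)) (\<delta> \<circ> comp_list ys)"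
      using diff_le_comp[OF Der_diff_le1[of \<delta> \<iota>] diff_le_comp_list[of ys \<iota>]] homogeneous by simp
    have "diff_le \<iota> (length xs' + Suc (length ys)) (brk (comp_list xs) a \<circ> (\<delta> \<circ> comp_list ys))"
      by (rule diff_le_comp[OF b c])
    moreover have "n = Suc (length xs' + Suc (length ys))" using homogeneous Cons by simp
    ultimately show ?thesis by (simp add: diff_lower_def comp_def)
  qed
  then show ?case using f t by simp
next
  case (symmetric xs ys)
  have f: "fin (\<lambda>zs. single xs zs - single ys zs)"
    using fin_add[OF fin_single fin_smult[OF fin_single], of xs "-1" ys] by simp
  have t: "tau (\<lambda>zs. single xs zs - single ys zs) = (\<lambda>x. comp_list xs x - comp_list ys x)"
    using tau_diff[OF fin_single fin_single] by (simp add: tau_single)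
  have "diff_lower \<iota> n (\<lambda>x. comp_list xs x - comp_list ys x)"
  proof (cases "xs = []")
    case True
    then have "ys = []" using symmetric by simp
    then show ?thesis using True dl_zero by simp
  next
    case False
    then have "n = Suc (length xs - 1)" using symmetric by (cases xs) auto
    then show ?thesis using perm_lower[OF symmetric(1) symmetric(3) False] by (simp add: diff_lower_def)
  qed
  then show ?case using f t by simp
qed

lemma clause2: "c \<in> sym_rel \<iota> n \<Longrightarrow> diff_lower \<iota> n (tau c)"
  using clause2_aux by (auto simp: sym_rel_def)

lemma R_fin: "sym_rel_p \<iota> n c \<Longrightarrow> fin c"
  using clause2_aux by blast

context proj
begin

lemma symb_wd': "set ds \<subseteq> D \<Longrightarrow> length ds = n \<Longrightarrow> wd n (symb ds)"
proof -
  assume a: "set ds \<subseteq> D" "length ds = n"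
  show ?thesis unfolding wd_def
  proof (intro allI impI)
    fix as bs :: "'a list" assume "length as + length bs + 1 = n"
    then show "(\<lambda>b. symb ds (as @ b # bs)) \<in> D" using symb_wd[OF a(1)] a(2) by simp
  qed
qed

lemma coef_zero: "coef (\<lambda>bs. 0) J = 0"
  by (induction J) (simp_all add: s_zero)

lemma coef_symb_Cons: "set ds \<subseteq> D \<Longrightarrow> length ds = Suc n \<Longrightarrow> length J = n \<Longrightarrow>
  coef (symb ds) (j # J) = (\<Sum>k<Suc n. s (ds ! k) j * coef (symb (rem k ds)) J)"
proof -
  assume ds: "set ds \<subseteq> D" and l: "length ds = Suc n" and lJ: "length J = n"
  have dk: "ds ! k \<in> D" if "k < Suc n" for k proof -
    have "ds ! k \<in> set ds" using l that by simp
    then show ?thesis using ds by blast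
  qed
  have "coef (symb ds) (j # J) = coef (\<lambda>bs. s (\<lambda>b. symb ds (b # bs)) j) J" by simp
  also have "\<dots> = coef (\<lambda>bs. \<Sum>k<Suc n. s (ds ! k) j * symb (rem k ds) bs) J"
  proof (rule coef_cong)
    fix bs :: "'a list"
    have "(\<lambda>b. symb ds (b # bs)) = (\<lambda>b. \<Sum>k<Suc n. symb (rem k ds) bs * (ds ! k) b)"
      by (rule ext) (simp add: symb_Cons2 l mult.commute del: sum.lessThan_Suc)
    then show "s (\<lambda>b. symb ds (b # bs)) j = (\<Sum>k<Suc n. s (ds ! k) j * symb (rem k ds) bs)"
      using s_sum[of "{..<Suc n}" "\<lambda>k. ds ! k" "\<lambda>k. symb (rem k ds) bs"] dk
      by (simp add: mult.commute del: sum.lessThan_Suc)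
  qed
  also have "\<dots> = (\<Sum>k<Suc n. s (ds ! k) j * coef (symb (rem k ds)) J)"
  proof (rule coef_lin)
    fix k assume k: "k \<in> {..<Suc n}"
    show "wd (length J) (symb (rem k ds))"
      using k ds l lJ set_rem[of k ds] by (intro symb_wd') (auto simp: length_rem)
  qed simp
  finally show ?thesis .
qed

lemma eqv_sum1: "finite S \<Longrightarrow> (\<And>i. i \<in> S \<Longrightarrow> eqv \<iota> n (f i) (h i)) \<Longrightarrow>
  eqv \<iota> n (\<lambda>zs. \<Sum>i\<in>S. f i zs) (\<lambda>zs. \<Sum>i\<in>S. h i zs)"
  using eqv_sum[of S \<iota> n f h "\<lambda>_. 1"] by simp

lemma single_round: "set ds \<subseteq> D \<Longrightarrow> length ds = n \<Longrightarrow>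
  eqv \<iota> n (\<lambda>zs. \<Sum>J\<in>LS n. coef (symb ds) J * single (map E J) zs) (\<lambda>zs. of_nat (fact n) * single ds zs)"
proof (induction n arbitrary: ds)
  case 0
  then have "ds = []" by simp
  then show ?case by (simp add: LS_0 eqv_refl)
next
  case (Suc n)
  have ds: "set ds \<subseteq> D" and l: "length ds = Suc n" using Suc.prems by auto
  have dk: "ds ! k \<in> D" if "k < Suc n" for k proof -
    have "ds ! k \<in> set ds" using l that by simp
    then show ?thesis using ds by blast
  qed
  have rk: "set (rem k ds) \<subseteq> D" "length (rem k ds) = n" if "k < Suc n" for k
    using ds l that set_rem[of k ds] by (auto simp: length_rem)
  define Q where "Q k = (\<lambda>zs. \<Sum>J\<in>LS n. coef (symb (rem k ds)) J * single (map E J) zs)" for k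
  have step1: "(\<lambda>zs. \<Sum>J\<in>LS (Suc n). coef (symb ds) J * single (map E J) zs)
     = (\<lambda>zs. \<Sum>k<Suc n. \<Sum>j<m. s (ds ! k) j * pre (E j) (Q k) zs)"
  proof (rule ext)
    fix zs
    have "(\<Sum>J\<in>LS (Suc n). coef (symb ds) J * single (map E J) zs)
       = (\<Sum>j<m. \<Sum>J\<in>LS n. coef (symb ds) (j # J) * single (E j # map E J) zs)"
      by (simp add: sum_LS_Suc del: sum.lessThan_Suc)
    also have "\<dots> = (\<Sum>j<m. \<Sum>J\<in>LS n. \<Sum>k<Suc n. s (ds ! k) j * (coef (symb (rem k ds)) J * single (E j # map E J) zs))"
      by (intro sum.cong refl) (simp add: coef_symb_Cons[OF ds l] LS_len sum_distrib_right mult.assoc del: sum.lessThan_Suc coef.simps(2))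
    also have "\<dots> = (\<Sum>k<Suc n. \<Sum>j<m. s (ds ! k) j * (\<Sum>J\<in>LS n. coef (symb (rem k ds)) J * single (E j # map E J) zs))"
      by (simp add: sum_distrib_left del: sum.lessThan_Suc) (subst sum.swap, subst (2) sum.swap, rule refl)
    also have "\<dots> = (\<Sum>k<Suc n. \<Sum>j<m. s (ds ! k) j * pre (E j) (Q k) zs)"
      by (simp add: Q_def pre_sum pre_single del: sum.lessThan_Suc)
    finally show "(\<Sum>J\<in>LS (Suc n). coef (symb ds) J * single (map E J) zs) = (\<Sum>k<Suc n. \<Sum>j<m. s (ds ! k) j * pre (E j) (Q k) zs)" .
  qed
  have step2: "eqv \<iota> (Suc n) (\<lambda>zs. \<Sum>j<m. s (ds ! k) j * pre (E j) (Q k) zs)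
       (\<lambda>zs. of_nat (fact n) * single ds zs)" if k: "k < Suc n" for k
  proof -
    have a: "eqv \<iota> (Suc n) (\<lambda>zs. \<Sum>j<m. s (ds ! k) j * pre (E j) (Q k) zs)
        (\<lambda>zs. \<Sum>j<m. s (ds ! k) j * pre (E j) (\<lambda>zs. of_nat (fact n) * single (rem k ds) zs) zs)"
      by (rule eqv_sum) (auto intro!: eqv_pre E_in simp: Q_def Suc.IH[OF rk[OF k]])
    have b: "(\<lambda>zs. \<Sum>j<m. s (ds ! k) j * pre (E j) (\<lambda>zs. of_nat (fact n) * single (rem k ds) zs) zs)
       = (\<lambda>zs. of_nat (fact n) * (\<Sum>j<m. s (ds ! k) j * single ([] @ [E j] @ rem k ds) zs))"
      by (simp add: pre_smult pre_single sum_distrib_left mult_ac)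
    have ex: "(\<lambda>x. \<Sum>j<m. s (ds ! k) j * E j x) = ds ! k"
      by (rule ext) (simp add: der_expand[OF dk[OF k]])
    have c: "eqv \<iota> (Suc n) (single ([] @ [(\<lambda>x. \<Sum>j<m. s (ds ! k) j * E j x)] @ rem k ds))
        (\<lambda>zs. \<Sum>j<m. s (ds ! k) j * single ([] @ [E j] @ rem k ds) zs)"
      using rk[OF k] by (intro single_slot_sum) (auto intro: E_in)
    have e2: "[] @ [(\<lambda>x. \<Sum>j<m. s (ds ! k) j * E j x)] @ rem k ds = ds ! k # rem k ds"
      by (simp only: ex append.simps)
    from eqv_sym[OF c] have c': "eqv \<iota> (Suc n) (\<lambda>zs. \<Sum>j<m. s (ds ! k) j * single ([] @ [E j] @ rem k ds) zs) (single (ds ! k # rem k ds))"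
      unfolding e2 .
    have d: "eqv \<iota> (Suc n) (single (ds ! k # rem k ds)) (single ds)"
    proof -
      have "sym_rel_p \<iota> (Suc n) (\<lambda>zs. single ds zs - single (ds ! k # rem k ds) zs)"
        by (rule sym_rel_p.symmetric[OF ds l]) (use mset_rem[of k ds] k l in simp)
      then have "eqv \<iota> (Suc n) (single ds) (single (ds ! k # rem k ds))" unfolding eqv_def .
      then show ?thesis by (rule eqv_sym)
    qed
    have "eqv \<iota> (Suc n) (\<lambda>zs. of_nat (fact n) * (\<Sum>j<m. s (ds ! k) j * single ([] @ [E j] @ rem k ds) zs))
        (\<lambda>zs. of_nat (fact n) * single ds zs)"
      by (rule eqv_smult[OF eqv_trans[OF c' d]])
    moreover from a have "eqv \<iota> (Suc n) (\<lambda>zs. \<Sum>j<m. s (ds ! k) j * pre (E j) (Q k) zs)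
       (\<lambda>zs. of_nat (fact n) * (\<Sum>j<m. s (ds ! k) j * single ([] @ [E j] @ rem k ds) zs))" unfolding b .
    ultimately show ?thesis using eqv_trans by blast
  qed
  have "eqv \<iota> (Suc n) (\<lambda>zs. \<Sum>k<Suc n. \<Sum>j<m. s (ds ! k) j * pre (E j) (Q k) zs)
      (\<lambda>zs. \<Sum>k<Suc n. of_nat (fact n) * single ds zs)"
    by (rule eqv_sum1) (use step2 in auto)
  moreover have "(\<lambda>zs. \<Sum>k<Suc n. of_nat (fact n) * single ds zs) = (\<lambda>zs. of_nat (fact (Suc n)) * single ds zs)"
    by (simp add: algebra_simps del: sum.lessThan_Suc)
  ultimately have "eqv \<iota> (Suc n) (\<lambda>zs. \<Sum>k<Suc n. \<Sum>j<m. s (ds ! k) j * pre (E j) (Q k) zs)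
      (\<lambda>zs. of_nat (fact (Suc n)) * single ds zs)" by simp
  then show ?case unfolding step1 .
qed

end

context proj
begin

lemma c_repr: "fin c \<Longrightarrow> c = (\<lambda>zs. \<Sum>xs\<in>{xs. c xs \<noteq> 0}. c xs * single xs zs)"
proof (rule ext)
  fix zs assume f: "fin c"
  have "(\<Sum>xs\<in>{xs. c xs \<noteq> 0}. c xs * single xs zs) = (\<Sum>xs\<in>{xs. c xs \<noteq> 0}. if xs = zs then c xs else 0)"
    by (rule sum.cong) (auto simp: single_def)
  also have "\<dots> = c zs" using f by (simp add: sum.delta')
  finally show "c zs = (\<Sum>xs\<in>{xs. c xs \<noteq> 0}. c xs * single xs zs)" by simp
qed

lemma round:
  assumes c: "c \<in> sym_free \<iota> n"
  shows "eqv \<iota> n (\<lambda>zs. of_nat (fact n) * c zs)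
     (\<lambda>zs. \<Sum>J\<in>LS n. coef (\<lambda>as. \<Sum>xs\<in>{xs. c xs \<noteq> 0}. c xs * symb xs as) J * single (map E J) zs)"
proof -
  let ?S = "{xs. c xs \<noteq> 0}"
  have f: "finite ?S" and sD: "\<And>xs. xs \<in> ?S \<Longrightarrow> set xs \<subseteq> D \<and> length xs = n"
    using c by (auto simp: sym_free_iff)
  have e1: "(\<lambda>zs. of_nat (fact n) * c zs) = (\<lambda>zs. \<Sum>xs\<in>?S. c xs * (of_nat (fact n) * single xs zs))"
  proof (rule ext)
    fix zs
    have "c zs = (\<Sum>xs\<in>?S. c xs * single xs zs)" using fun_cong[OF c_repr[OF f], of zs] .
    then show "of_nat (fact n) * c zs = (\<Sum>xs\<in>?S. c xs * (of_nat (fact n) * single xs zs))"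
      by (simp add: sum_distrib_left mult_ac)
  qed
  have e2: "eqv \<iota> n (\<lambda>zs. \<Sum>xs\<in>?S. c xs * (of_nat (fact n) * single xs zs))
      (\<lambda>zs. \<Sum>xs\<in>?S. c xs * (\<Sum>J\<in>LS n. coef (symb xs) J * single (map E J) zs))"
  proof (rule eqv_sum[OF f])
    fix xs assume "xs \<in> ?S"
    then have "set xs \<subseteq> D" "length xs = n" using sD by auto
    from eqv_sym[OF single_round[OF this]]
    show "eqv \<iota> n (\<lambda>zs. of_nat (fact n) * single xs zs) (\<lambda>zs. \<Sum>J\<in>LS n. coef (symb xs) J * single (map E J) zs)" .
  qed
  have e3: "(\<lambda>zs. \<Sum>xs\<in>?S. c xs * (\<Sum>J\<in>LS n. coef (symb xs) J * single (map E J) zs))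
     = (\<lambda>zs. \<Sum>J\<in>LS n. coef (\<lambda>as. \<Sum>xs\<in>?S. c xs * symb xs as) J * single (map E J) zs)"
  proof (rule ext)
    fix zs
    have cl: "coef (\<lambda>as. \<Sum>xs\<in>?S. c xs * symb xs as) J = (\<Sum>xs\<in>?S. c xs * coef (symb xs) J)" if "J \<in> LS n" for J
    proof (rule coef_lin[OF f])
      fix xs assume "xs \<in> ?S"
      then show "wd (length J) (symb xs)" using sD that LS_len by (intro symb_wd') auto
    qed
    have "(\<Sum>xs\<in>?S. c xs * (\<Sum>J\<in>LS n. coef (symb xs) J * single (map E J) zs))
        = (\<Sum>J\<in>LS n. \<Sum>xs\<in>?S. c xs * coef (symb xs) J * single (map E J) zs)"
      by (simp add: sum_distrib_left mult.assoc) (rule sum.swap)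
    also have "\<dots> = (\<Sum>J\<in>LS n. coef (\<lambda>as. \<Sum>xs\<in>?S. c xs * symb xs as) J * single (map E J) zs)"
      by (rule sum.cong[OF refl]) (simp add: cl sum_distrib_right)
    finally show "(\<Sum>xs\<in>?S. c xs * (\<Sum>J\<in>LS n. coef (symb xs) J * single (map E J) zs))
        = (\<Sum>J\<in>LS n. coef (\<lambda>as. \<Sum>xs\<in>?S. c xs * symb xs as) J * single (map E J) zs)" .
  qed
  from e2 show ?thesis unfolding e1 e3 .
qed

lemma clause3:
  assumes c: "c \<in> sym_free \<iota> n" and low: "diff_lower \<iota> n (tau c)"
    and r: "of_nat (fact n) * (r::'a) = 1"
  shows "c \<in> sym_rel \<iota> n"
proof (cases n)
  case 0
  have sub: "{xs. c xs \<noteq> 0} \<subseteq> {[]}" using c 0 by (auto simp: sym_free_iff)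
  have "tau c = (\<lambda>x. \<Sum>xs\<in>{[]}. c xs * comp_list xs x)" by (rule tau_eq[OF _ sub]) simp
  then have "tau c = (\<lambda>x. c [] * x)" by simp
  moreover have "tau c = (\<lambda>x. 0)" using low 0 by (simp add: diff_lower_def)
  ultimately have "c [] = 0" by (metis mult_1_right)
  then have "c = (\<lambda>zs. 0)" using sub by (auto simp: fun_eq_iff)
  then show ?thesis by (simp add: sym_rel_def sym_rel_p.zero)
next
  case (Suc k)
  let ?S = "{xs. c xs \<noteq> 0}"
  have f: "finite ?S" and sD: "\<And>xs. xs \<in> ?S \<Longrightarrow> set xs \<subseteq> D \<and> length xs = n"
    using c by (auto simp: sym_free_iff)
  have dk: "diff_le \<iota> k (tau c)" using low Suc by (simp add: diff_lower_def)
  have Fz: "(\<Sum>xs\<in>?S. c xs * symb xs bs) = 0" if lb: "length bs = n" for bs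
  proof -
    have "brs (tau c) bs = (\<lambda>x. \<Sum>xs\<in>?S. c xs * brs (comp_list xs) bs x)"
      unfolding tau_def by (rule brs_sum)
    then have "brs (tau c) bs 1 = (\<Sum>xs\<in>?S. c xs * brs (comp_list xs) bs 1)" by simp
    also have "\<dots> = (\<Sum>xs\<in>?S. c xs * symb xs bs)"
    proof (rule sum.cong[OF refl])
      fix xs assume "xs \<in> ?S"
      then have h: "set xs \<subseteq> D" "length bs = length xs" using sD lb by auto
      show "c xs * brs (comp_list xs) bs 1 = c xs * symb xs bs" using symb_brs[OF h] by simp
    qed
    finally have "brs (tau c) bs 1 = (\<Sum>xs\<in>?S. c xs * symb xs bs)" .
    moreover have "brs (tau c) bs = (\<lambda>x. 0)" using brs_gt_len[OF dk] lb Suc by simp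
    ultimately show ?thesis by simp
  qed
  have cz: "coef (\<lambda>as. \<Sum>xs\<in>?S. c xs * symb xs as) J = 0" if "J \<in> LS n" for J
  proof -
    have "coef (\<lambda>as. \<Sum>xs\<in>?S. c xs * symb xs as) J = coef (\<lambda>as. 0) J"
      by (rule coef_cong) (use Fz LS_len[OF that] in simp)
    then show ?thesis by (simp add: coef_zero)
  qed
  have "eqv \<iota> n (\<lambda>zs. of_nat (fact n) * c zs) (\<lambda>zs. \<Sum>J\<in>LS n. coef (\<lambda>as. \<Sum>xs\<in>?S. c xs * symb xs as) J * single (map E J) zs)"
    by (rule round[OF c])
  moreover have "(\<lambda>zs. \<Sum>J\<in>LS n. coef (\<lambda>as. \<Sum>xs\<in>?S. c xs * symb xs as) J * single (map E J) zs) = (\<lambda>zs. 0)"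
    by (simp add: cz)
  ultimately have "sym_rel_p \<iota> n (\<lambda>zs. of_nat (fact n) * c zs)" using eqv_R by simp
  then have "sym_rel_p \<iota> n (\<lambda>zs. r * (of_nat (fact n) * c zs))" by (rule sym_rel_p.smult)
  moreover have "(\<lambda>zs. r * (of_nat (fact n) * c zs)) = c" using r by (simp add: mult.assoc[symmetric] mult.commute)
  ultimately show ?thesis by (simp add: sym_rel_def)
qed

lemma clause4:
  assumes phi: "diff_le \<iota> n \<phi>" and r: "of_nat (fact n) * (r::'a) = 1"
  shows "\<exists>c\<in>sym_free \<iota> n. diff_lower \<iota> n (\<lambda>x. \<phi> x - tau c x)"
proof (cases n)
  case 0
  then obtain a where a: "\<phi> = (\<lambda>x. a * x)" using phi by (auto elim: diff_le0E)
  let ?c = "\<lambda>zs. a * single [] zs"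
  have "?c \<in> sym_free \<iota> n"
    using 0 fin_smult[OF fin_single, of a "[]"] by (auto simp: sym_free_iff single_def)
  moreover have "tau ?c = (\<lambda>x. a * x)" using tau_smult[OF fin_single, of a "[]"] by (simp add: tau_single)
  ultimately show ?thesis using 0 a by (intro bexI[of _ ?c]) (auto simp: diff_lower_def)
next
  case (Suc k)
  define F where "F as = brs \<phi> as 1" for as
  have Fw: "wd n F" unfolding wd_def F_def using symbol_der[OF phi] by blast
  have Fs: "symmetric F" unfolding symmetric_def F_def using brs_perm by metis
  let ?c = "\<lambda>zs. \<Sum>J\<in>LS n. (r * coef F J) * single (map E J) zs"
  have fc: "fin ?c" by (rule fin_sum[OF finite_LS]) (simp add: fin_single)
  have cs: "?c \<in> sym_free \<iota> n"
  proof -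
    have "length xs = n \<and> set xs \<subseteq> D" if "?c xs \<noteq> 0" for xs
    proof -
      from that obtain J where "J \<in> LS n" "single (map E J) xs \<noteq> 0"
        by (metis (no_types, lifting) mult_zero_right sum.neutral)
      then show ?thesis using LS_len LS_set by (auto simp: single_def split: if_splits)
    qed
    then show ?thesis using fc by (simp add: sym_free_iff)
  qed
  have "tau ?c = (\<lambda>x. \<Sum>J\<in>LS n. (r * coef F J) * tau (single (map E J)) x)"
    by (rule tau_sum[OF finite_LS]) (rule fin_single)
  then have tc: "tau ?c = (\<lambda>x. \<Sum>J\<in>LS n. (r * coef F J) * comp_list (map E J) x)"
    by (simp only: tau_single)
  have dl: "diff_le \<iota> n (\<lambda>x. \<phi> x - tau ?c x)" by (rule diff_le_minus[OF phi clause1[OF cs]])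
  have "brs (\<lambda>x. \<phi> x - tau ?c x) as 1 = 0" if la: "length as = Suc k" for as
  proof -
    have "brs (tau ?c) as 1 = (\<Sum>J\<in>LS n. (r * coef F J) * brs (comp_list (map E J)) as 1)"
      unfolding tc brs_sum by simp
    also have "\<dots> = (\<Sum>J\<in>LS n. (r * coef F J) * symb (map E J) as)"
    proof (rule sum.cong[OF refl])
      fix J assume J: "J \<in> LS n"
      have h: "set (map E J) \<subseteq> D" "length as = length (map E J)"
        using LS_set[OF J] LS_len[OF J] la Suc by auto
      show "r * coef F J * brs (comp_list (map E J)) as 1 = r * coef F J * symb (map E J) as"
        using symb_brs[OF h] by simp
    qed
    also have "\<dots> = r * (\<Sum>J\<in>LS n. coef F J * symb (map E J) as)"
      by (simp add: sum_distrib_left mult.assoc)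
    also have "\<dots> = r * (of_nat (fact n) * F as)"
      using sym_main[OF Fw Fs] la Suc by simp
    also have "\<dots> = F as" using r by (simp add: mult.assoc[symmetric] mult.commute)
    finally have "brs (tau ?c) as 1 = F as" .
    then show ?thesis unfolding brs_minus by (simp add: F_def)
  qed
  then have "diff_le \<iota> k (\<lambda>x. \<phi> x - tau ?c x)" using diff_le_reduce[of \<iota> k] dl Suc by blast
  then show ?thesis using cs Suc by (intro bexI[of _ ?c]) (auto simp: diff_lower_def)
qed

end

theorem mainTheorem17:
  fixes \<iota> :: "'k::comm_ring_1 \<Rightarrow> 'a::comm_ring_1"
  assumes "ring_hom_map \<iota>"
    and "contains_rationals TYPE('a)"
    and "Der_fg_projective \<iota>"
  shows "\<forall>n. (\<forall>c\<in>sym_free \<iota> n. diff_le \<iota> n (tau c))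
           \<and> (\<forall>c\<in>sym_rel \<iota> n. diff_lower \<iota> n (tau c))
           \<and> (\<forall>c\<in>sym_free \<iota> n. diff_lower \<iota> n (tau c) \<longrightarrow> c \<in> sym_rel \<iota> n)
           \<and> (\<forall>\<phi>. diff_le \<iota> n \<phi> \<longrightarrow> (\<exists>c\<in>sym_free \<iota> n. diff_lower \<iota> n (\<lambda>x. \<phi> x - tau c x)))"
proof -
  obtain m s p where h: "(\<forall>\<delta>\<in>Der \<iota>. s \<delta> \<in> free_fin m)
    \<and> (\<forall>v\<in>free_fin m. p v \<in> Der \<iota>)
    \<and> (\<forall>\<delta>\<in>Der \<iota>. \<forall>\<delta>'\<in>Der \<iota>. s (\<lambda>x. \<delta> x + \<delta>' x) = (\<lambda>i. s \<delta> i + s \<delta>' i))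
    \<and> (\<forall>\<delta>\<in>Der \<iota>. \<forall>a. s (\<lambda>x. a * \<delta> x) = (\<lambda>i. a * s \<delta> i))
    \<and> (\<forall>v\<in>free_fin m. \<forall>w\<in>free_fin m. p (\<lambda>i. v i + w i) = (\<lambda>x. p v x + p w x))
    \<and> (\<forall>v\<in>free_fin m. \<forall>a. p (\<lambda>i. a * v i) = (\<lambda>x. a * p v x))
    \<and> (\<forall>\<delta>\<in>Der \<iota>. p (s \<delta>) = \<delta>)"
    using assms(3) unfolding Der_fg_projective_def by blast
  have P: "proj \<iota> m s p" unfolding proj_def using h by blast
  interpret proj \<iota> m s p by (rule P)
  have inv: "\<exists>r::'a. of_nat (fact n) * r = 1" for n
    using assms(2) fact_gt_zero[of n] unfolding contains_rationals_def by (metis of_nat_fact)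
  show ?thesis
  proof (intro allI conjI ballI impI)
    fix n
    obtain r :: 'a where r: "of_nat (fact n) * r = 1" using inv by blast
    { fix c assume "c \<in> sym_free \<iota> n" then show "diff_le \<iota> n (tau c)" by (rule clause1) }
    { fix c assume "c \<in> sym_rel \<iota> n" then show "diff_lower \<iota> n (tau c)" by (rule clause2) }
    { fix c assume "c \<in> sym_free \<iota> n" "diff_lower \<iota> n (tau c)"
      then show "c \<in> sym_rel \<iota> n" using clause3 r by blast }
    { fix \<phi> assume "diff_le \<iota> n \<phi>"
      then show "\<exists>c\<in>sym_free \<iota> n. diff_lower \<iota> n (\<lambda>x. \<phi> x - tau c x)" using clause4 r by blast }
  qed
qed

end
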